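(* Let $A\ge6$ be an integer, let $R'_A$ be the quasi-regular hexagon of largest area among those with area at most $A$, and let $k=A-\|R'_A\|$. Then the minimum of the edge-perimeter $p(P)$ over all polyiamonds $P$ with $\|P\|=A$ equals $$p(R'_A)+\mathbb 1_{\{k>0\}}+\mathbb 1_{\{k>0,\ k\text{ even}\}},$$ and this minimum is attained by the (standard) polyiamond obtained by attaching to $R'_A$ an incomplete bar of $k$ faces along the side where the next quasi-regular hexagon in the area ordering is obtained.
   Context: Faces are the closed triangular faces of the triangular lattice $\mathbb T^2$ in $\mathbb R^2$. A polyiamond $P$ is a finite nonempty union of faces that is connected through shared edges (two faces sharing only a vertex are not adjacent); faces not in $P$ are empty faces. Its area $\|P\|$ is the number of its faces; its edge-perimeter $p(P)$ is the number of edges of $\mathbb T^2$ separating a face of $P$ from an empty face; its site-perimeter $s(P)$ is the number of empty faces sharing at least one edge with a face of $P$. For integers $d\ge1$, $a,b,c\ge0$ with $a+b,b+c,c+a\le d$, $T^d_{a,b,c}$ is the polyiamond obtained from an equilateral triangle of side length $d$ with sides on lattice lines (the union of its $d^2$ faces) by removing the equilateral sub-triangles of side lengths $a,b,c$ at its three corners; its boundary is a (possibly degenerate) hexagon with side lengths, in cyclic order, $a,\ d-a-b,\ b,\ d-b-c,\ c,\ d-c-a$, its area is $d^2-a^2-b^2-c^2$ and its edge- and site-perimeter equal $3d-a-b-c$. Quasi-regular hexagons: for $r\ge1$ let $E(r)=T^{3r}_{r,r,r}$ (regular hexagon of side $r$), $E_{B_1}(r)=T^{3r}_{r-1,r,r}$,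 $E_{B_2}(r)=T^{3r+1}_{r,r,r+1}$, $E_{B_3}(r)=T^{3r+1}_{r,r,r}$, $E_{B_4}(r)=T^{3r+2}_{r,r+1,r+1}$, $E_{B_5}(r)=T^{3r+2}_{r,r,r+1}$ (equivalently, $E_{B_i}(r)$ arises from $E(r)$ by successively attaching $i$ complete rows, called bars, of $2r-1$, $2r+1,\dots$ faces along sides, and attaching a further bar of $2r+3$ faces to $E_{B_5}(r)$ gives $E(r+1)$). Their areas are $6r^2,\ 6r^2+2r-1,\ 6r^2+4r,\ 6r^2+6r+1,\ 6r^2+8r+2,\ 6r^2+10r+3$, and their edge-perimeters are $6r,6r+1,\dots,6r+5$. A quasi-regular hexagon is any image of one of these under a symmetry (translation, rotation, reflection) of $\mathbb T^2$; $\mathcal Q$ denotes the set of all quasi-regular hexagons. Ordered by area, the quasi-regular hexagons $E(1),E_{B_1}(1),\dots,E_{B_5}(1),E(2),\dots$ have strictly increasing areas and edge-perimeters $6,7,8,\dots$. An incomplete bar is an edge-connected proper subset of the bar attached to pass from one quasi-regular hexagon to the next. *)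

theory Defs
  imports Main
begin

text \<open>Vertices of the triangular lattice in the lattice basis e1 = (1,0), e2 = (1/2, sqrt 3/2):
  the point (x,y) stands for x e1 + y e2.  A face is represented by its set of three vertices.\<close>

type_synonym vertex = "int \<times> int"
type_synonym face = "vertex set"

definition up_face :: "vertex \<Rightarrow> face" where
  "up_face v = (case v of (i, j) \<Rightarrow> {(i, j), (i + 1, j), (i, j + 1)})"

definition down_face :: "vertex \<Rightarrow> face" where
  "down_face v = (case v of (i, j) \<Rightarrow> {(i + 1, j), (i, j + 1), (i + 1, j + 1)})"

definition faces :: "face set" where
  "faces = range up_face \<union> range down_face"

definition lattice_edges :: "vertex set set" where
  "lattice_edges = {e. card e = 2 \<and> (\<exists>F\<in>faces. e \<subseteq> F)}"

definition adjacent :: "face \<Rightarrow> face \<Rightarrow> bool" where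
  "adjacent F G \<longleftrightarrow> F \<in> faces \<and> G \<in> faces \<and> F \<noteq> G \<and>
     (\<exists>e\<in>lattice_edges. e \<subseteq> F \<and> e \<subseteq> G)"

definition edge_connected :: "face set \<Rightarrow> bool" where
  "edge_connected S \<longleftrightarrow>
     (\<forall>F\<in>S. \<forall>G\<in>S. (\<lambda>X Y. X \<in> S \<and> Y \<in> S \<and> adjacent X Y)\<^sup>*\<^sup>* F G)"

definition polyiamond :: "face set \<Rightarrow> bool" where
  "polyiamond P \<longleftrightarrow> P \<subseteq> faces \<and> finite P \<and> P \<noteq> {} \<and> edge_connected P"

definition area :: "face set \<Rightarrow> nat" where
  "area P = card P"

definition edge_perimeter :: "face set \<Rightarrow> nat" where
  "edge_perimeter P = card {e \<in> lattice_edges.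
      \<exists>F\<in>P. \<exists>G\<in>faces. G \<notin> P \<and> e \<subseteq> F \<and> e \<subseteq> G}"

text \<open>T^d_{a,b,c}: big triangle with corners (0,0), (d,0), (0,d), minus the corner triangles
  of sides a (at (0,0)), b (at (d,0)), c (at (0,d)).  A face lies in a closed region iff all
  of its vertices do.\<close>
definition tri_hex :: "nat \<Rightarrow> nat \<Rightarrow> nat \<Rightarrow> nat \<Rightarrow> face set" where
  "tri_hex d a b c =
     {F \<in> faces. (\<forall>(x, y)\<in>F. 0 \<le> x \<and> 0 \<le> y \<and> x + y \<le> int d)
        \<and> \<not> (\<forall>(x, y)\<in>F. x + y \<le> int a)
        \<and> \<not> (\<forall>(x, y)\<in>F. x \<ge> int d - int b)
        \<and> \<not> (\<forall>(x, y)\<in>F. y \<ge> int d - int c)}"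

text \<open>The quasi-regular hexagons E(r), E_{B_1}(r), ..., E_{B_5}(r).\<close>
definition qhex :: "nat \<Rightarrow> nat \<Rightarrow> face set" where
  "qhex r i =
     (if i = 0 then tri_hex (3*r) r r r
      else if i = 1 then tri_hex (3*r) (r - 1) r r
      else if i = 2 then tri_hex (3*r + 1) r r (r + 1)
      else if i = 3 then tri_hex (3*r + 1) r r r
      else if i = 4 then tri_hex (3*r + 2) r (r + 1) (r + 1)
      else tri_hex (3*r + 2) r r (r + 1))"

definition qh_seq :: "nat \<Rightarrow> face set" where
  "qh_seq n = qhex (n div 6 + 1) (n mod 6)"

definition rot60 :: "vertex \<Rightarrow> vertex" where
  "rot60 v = (case v of (x, y) \<Rightarrow> (- y, x + y))"

definition refl_lat :: "vertex \<Rightarrow> vertex" where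
  "refl_lat v = (case v of (x, y) \<Rightarrow> (y, x))"

definition lattice_sym :: "(vertex \<Rightarrow> vertex) \<Rightarrow> bool" where
  "lattice_sym g \<longleftrightarrow> (\<exists>k::nat. \<exists>m::nat. \<exists>tx ty. k < 6 \<and> m < 2 \<and>
      g = (\<lambda>v. case (rot60 ^^ k) ((refl_lat ^^ m) v) of (x, y) \<Rightarrow> (x + tx, y + ty)))"

definition sym_image :: "(vertex \<Rightarrow> vertex) \<Rightarrow> face set \<Rightarrow> face set" where
  "sym_image g S = (\<lambda>F. g ` F) ` S"

end

theory Submission
  imports Defs
begin

type_synonym tri = "int \<times> int \<times> int"

definition valid :: "tri \<Rightarrow> bool" where
  "valid f = (case f of (X,Y,S) \<Rightarrow> S = X + Y \<or> S = X + Y + 1)"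

definition nbrs :: "tri \<Rightarrow> tri set" where
  "nbrs f = (case f of (X,Y,S) \<Rightarrow> if S = X + Y then {(X,Y,S+1),(X,Y-1,S),(X-1,Y,S)}
      else {(X,Y,S-1),(X,Y+1,S),(X+1,Y,S)})"

definition madj :: "tri \<Rightarrow> tri \<Rightarrow> bool" where
  "madj f g = (valid f \<and> g \<in> nbrs f)"

definition mk :: "tri \<Rightarrow> face" where
  "mk f = (case f of (X,Y,S) \<Rightarrow> if S = X + Y then up_face (X,Y) else down_face (X,Y))"

definition cnd :: "tri \<Rightarrow> vertex \<Rightarrow> bool" where
  "cnd f v = (case f of (X,Y,S) \<Rightarrow> case v of (x,y) \<Rightarrow>
     X \<le> x \<and> x \<le> X + 1 \<and> Y \<le> y \<and> y \<le> Y + 1 \<and> S \<le> x + y \<and> x + y \<le> S + 1)"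

lemma madj_sym: "madj f g \<longleftrightarrow> madj g f"
  by (cases f; cases g) (auto simp: madj_def nbrs_def valid_def split: if_splits)

lemma madj_valid: "madj f g \<Longrightarrow> valid f \<and> valid g"
  by (cases f; cases g) (auto simp: madj_def nbrs_def valid_def split: if_splits)

lemma mk_cnd: "valid f \<Longrightarrow> mk f = {v. cnd f v}"
  by (cases f) (auto simp: valid_def mk_def cnd_def up_face_def down_face_def)

lemma edgeH: "valid g \<Longrightarrow> cnd g (x,y) \<Longrightarrow> cnd g (x+1,y) \<Longrightarrow> g = (x,y,x+y) \<or> g = (x,y-1,x+y)"
  by (cases g) (auto simp: valid_def cnd_def)
lemma edgeV: "valid g \<Longrightarrow> cnd g (x,y) \<Longrightarrow> cnd g (x,y+1) \<Longrightarrow> g = (x,y,x+y) \<or> g = (x-1,y,x+y)"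
  by (cases g) (auto simp: valid_def cnd_def)
lemma edgeD: "valid g \<Longrightarrow> cnd g (x+1,y) \<Longrightarrow> cnd g (x,y+1) \<Longrightarrow> g = (x,y,x+y) \<or> g = (x,y,x+y+1)"
  by (cases g) (auto simp: valid_def cnd_def)

lemma cnd_up: "cnd (X,Y,X+Y) v \<longleftrightarrow> v \<in> {(X,Y),(X+1,Y),(X,Y+1)}"
  by (cases v) (auto simp: cnd_def)
lemma cnd_down: "cnd (X,Y,X+Y+1) v \<longleftrightarrow> v \<in> {(X+1,Y),(X,Y+1),(X+1,Y+1)}"
  by (cases v) (auto simp: cnd_def)

lemma mk_inj: assumes "valid f" "valid g" "mk f = mk g" shows "f = g"
proof -
  have e: "cnd f v \<longleftrightarrow> cnd g v" for v using assms mk_cnd by blast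
  obtain X Y S where f: "f = (X,Y,S)" by (cases f)
  show ?thesis
  proof (cases "S = X + Y")
    case True
    have "cnd g (X,Y)" "cnd g (X+1,Y)" "cnd g (X,Y+1)" using e f True cnd_up by auto
    then show ?thesis using edgeH[OF assms(2)] edgeV[OF assms(2)] f True by fastforce
  next
    case False
    then have S: "S = X+Y+1" using assms(1) f by (simp add: valid_def)
    have "cnd g (X+1,Y)" "cnd g (X,Y+1)" "cnd g (X+1,Y+1)" using e f S cnd_down by auto
    then show ?thesis using edgeD[OF assms(2)] edgeH[OF assms(2), of X "Y+1"] f S by fastforce
  qed
qed

lemma valid_cases: "valid f \<Longrightarrow> (\<And>X Y. f = (X,Y,X+Y) \<Longrightarrow> P) \<Longrightarrow> (\<And>X Y. f = (X,Y,X+Y+1) \<Longrightarrow> P) \<Longrightarrow> P"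
  by (cases f) (auto simp: valid_def)

lemma valid_up[simp]: "valid (X,Y,X+Y)" and valid_down[simp]: "valid (X,Y,X+Y+1)"
  by (auto simp: valid_def)

lemma faces_eq: "faces = mk ` {f. valid f}"
proof
  show "faces \<subseteq> mk ` {f. valid f}"
  proof
    fix F assume "F \<in> faces"
    then obtain v where "F = up_face v \<or> F = down_face v" by (auto simp: faces_def)
    then show "F \<in> mk ` {f. valid f}"
    proof
      assume "F = up_face v" then have "F = mk (fst v, snd v, fst v + snd v)" by (cases v) (simp add: mk_def)
      then show ?thesis by (metis image_eqI mem_Collect_eq valid_up)
    next
      assume "F = down_face v" then have "F = mk (fst v, snd v, fst v + snd v + 1)" by (cases v) (simp add: mk_def)
      then show ?thesis by (metis image_eqI mem_Collect_eq valid_down)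
    qed
  qed
  show "mk ` {f. valid f} \<subseteq> faces"
    by (auto simp: faces_def mk_def valid_def split: prod.splits)
qed

lemma mk_up: "S = X + Y \<Longrightarrow> mk (X,Y,S) = {(X,Y),(X+1,Y),(X,Y+1)}"
  by (simp add: mk_def up_face_def)
lemma mk_down: "S = X + Y + 1 \<Longrightarrow> mk (X,Y,S) = {(X+1,Y),(X,Y+1),(X+1,Y+1)}"
  by (simp add: mk_def down_face_def)

lemma mem_mk: "valid h \<Longrightarrow> u \<in> mk h \<longleftrightarrow> cnd h u"
  using mk_cnd by blast

lemma edge_lemma:
  assumes "madj f g"
  shows "\<exists>u w. u \<noteq> w \<and> mk f \<inter> mk g = {u,w} \<and> (\<forall>h. valid h \<longrightarrow> u \<in> mk h \<longrightarrow> w \<in> mk h \<longrightarrow> h = f \<or> h = g)"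
proof -
  have vf: "valid f" and gn: "g \<in> nbrs f" using assms by (auto simp: madj_def)
  show ?thesis
  proof (rule valid_cases[OF vf])
    fix X Y assume f: "f = (X,Y,X+Y)"
    then have "g = (X,Y,X+Y+1) \<or> g = (X,Y-1,X+Y) \<or> g = (X-1,Y,X+Y)" using gn by (simp add: nbrs_def)
    then show ?thesis
    proof (elim disjE)
      assume g: "g = (X,Y,X+Y+1)"
      show ?thesis
        apply (rule exI[of _ "(X+1,Y)"], rule exI[of _ "(X,Y+1)"])
        using edgeD[of _ X Y] by (auto simp: f g mk_up mk_down mem_mk)
    next
      assume g: "g = (X,Y-1,X+Y)"
      show ?thesis
        apply (rule exI[of _ "(X,Y)"], rule exI[of _ "(X+1,Y)"])
        using edgeH[of _ X Y] by (auto simp: f g mk_up mk_down mem_mk)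
    next
      assume g: "g = (X-1,Y,X+Y)"
      show ?thesis
        apply (rule exI[of _ "(X,Y)"], rule exI[of _ "(X,Y+1)"])
        using edgeV[of _ X Y] by (auto simp: f g mk_up mk_down mem_mk)
    qed
  next
    fix X Y assume f: "f = (X,Y,X+Y+1)"
    then have "g = (X,Y,X+Y) \<or> g = (X,Y+1,X+Y+1) \<or> g = (X+1,Y,X+Y+1)" using gn by (simp add: nbrs_def)
    then show ?thesis
    proof (elim disjE)
      assume g: "g = (X,Y,X+Y)"
      show ?thesis
        apply (rule exI[of _ "(X+1,Y)"], rule exI[of _ "(X,Y+1)"])
        using edgeD[of _ X Y] by (auto simp: f g mk_up mk_down mem_mk)
    next
      assume g: "g = (X,Y+1,X+Y+1)"
      show ?thesis
        apply (rule exI[of _ "(X,Y+1)"], rule exI[of _ "(X+1,Y+1)"])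
        using edgeH[of _ X "Y+1"] by (auto simp: f g mk_up mk_down mem_mk algebra_simps)
    next
      assume g: "g = (X+1,Y,X+Y+1)"
      show ?thesis
        apply (rule exI[of _ "(X+1,Y)"], rule exI[of _ "(X+1,Y+1)"])
        using edgeV[of _ "X+1" Y] by (auto simp: f g mk_up mk_down mem_mk algebra_simps)
    qed
  qed
qed

lemma two_in_face: assumes "valid f" "u \<noteq> w" "u \<in> mk f" "w \<in> mk f"
  shows "\<exists>nb \<in> nbrs f. u \<in> mk nb \<and> w \<in> mk nb"
proof (rule valid_cases[OF assms(1)])
  fix X Y assume f: "f = (X,Y,X+Y)"
  show ?thesis using assms(2-4) by (auto simp: f nbrs_def mk_up mk_down)
next
  fix X Y assume f: "f = (X,Y,X+Y+1)"
  show ?thesis using assms(2-4) by (auto simp: f nbrs_def mk_up mk_down)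
qed

lemma share2_madj: assumes "valid f" "valid g" "f \<noteq> g" "u \<noteq> w" "u \<in> mk f" "w \<in> mk f" "u \<in> mk g" "w \<in> mk g"
  shows "madj f g"
proof -
  obtain nb where nb: "nb \<in> nbrs f" "u \<in> mk nb" "w \<in> mk nb" using two_in_face assms by blast
  have "madj f nb" using nb assms by (simp add: madj_def)
  from edge_lemma[OF this] obtain u0 w0 where e: "u0 \<noteq> w0" "mk f \<inter> mk nb = {u0,w0}"
     "\<forall>h. valid h \<longrightarrow> u0 \<in> mk h \<longrightarrow> w0 \<in> mk h \<longrightarrow> h = f \<or> h = nb" by blast
  have "{u,w} = {u0,w0}" using e(2) nb assms(4,5,6) by (metis Int_iff doubleton_eq_iff insertE singletonD)
  then have "g = f \<or> g = nb" using e(3) assms(2,7,8) by (metis doubleton_eq_iff)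
  then show ?thesis using assms(3) \<open>madj f nb\<close> by auto
qed

lemma card_mk_inter: assumes "madj f g" shows "card (mk f \<inter> mk g) = 2"
  using edge_lemma[OF assms] by auto

lemma madj_neq: "madj f g \<Longrightarrow> f \<noteq> g"
  by (cases f) (auto simp: madj_def nbrs_def split: if_splits)

definition bp :: "tri set \<Rightarrow> (tri \<times> tri) set" where
  "bp M = {(f,g). f \<in> M \<and> g \<notin> M \<and> madj f g}"
definition perim :: "tri set \<Rightarrow> nat" where
  "perim M = card (bp M)"
definition mconn :: "tri set \<Rightarrow> bool" where
  "mconn M \<longleftrightarrow> (\<forall>f\<in>M. \<forall>g\<in>M. (\<lambda>a b. a \<in> M \<and> b \<in> M \<and> madj a b)\<^sup>*\<^sup>* f g)"

lemma inj_mk: "inj_on mk {f. valid f}"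
  using mk_inj by (auto simp: inj_on_def)

lemma mk_in_image: assumes "M \<subseteq> {f. valid f}" "valid g" shows "mk g \<in> mk ` M \<longleftrightarrow> g \<in> M"
proof
  assume "mk g \<in> mk ` M"
  then obtain x where "x \<in> M" "mk g = mk x" by blast
  then show "g \<in> M" using mk_inj[OF assms(2), of x] assms(1) by auto
qed auto

lemma mk_face: "valid f \<Longrightarrow> mk f \<in> faces"
  using faces_eq by blast

lemma inter_edge: assumes "madj f g" shows "mk f \<inter> mk g \<in> lattice_edges"
proof -
  have "mk f \<in> faces" using mk_face madj_valid[OF assms] by blast
  moreover have "mk f \<inter> mk g \<subseteq> mk f" by blast
  ultimately show ?thesis unfolding lattice_edges_def using card_mk_inter[OF assms] by blast
qed

lemma ep_eq: assumes M: "M \<subseteq> {f. valid f}" shows "edge_perimeter (mk ` M) = perim M"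
proof -
  let ?ES = "{e \<in> lattice_edges. \<exists>F\<in>mk ` M. \<exists>G\<in>faces. G \<notin> mk ` M \<and> e \<subseteq> F \<and> e \<subseteq> G}"
  let ?h = "\<lambda>(f,g). mk f \<inter> mk g"
  have "bij_betw ?h (bp M) ?ES"
  proof (rule bij_betwI')
    fix p q assume p: "p \<in> bp M" and q: "q \<in> bp M"
    obtain f g where pfg: "p = (f,g)" by (cases p)
    obtain f' g' where qfg: "q = (f',g')" by (cases q)
    have a: "f \<in> M" "g \<notin> M" "madj f g" using p pfg by (auto simp: bp_def)
    have b: "f' \<in> M" "g' \<notin> M" "madj f' g'" using q qfg by (auto simp: bp_def)
    from edge_lemma[OF a(3)] obtain u w where e: "u \<noteq> w" "mk f \<inter> mk g = {u,w}"
     "\<forall>h. valid h \<longrightarrow> u \<in> mk h \<longrightarrow> w \<in> mk h \<longrightarrow> h = f \<or> h = g" by blast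
    show "(?h p = ?h q) = (p = q)"
    proof
      assume "?h p = ?h q"
      then have uw: "u \<in> mk f'" "w \<in> mk f'" "u \<in> mk g'" "w \<in> mk g'" using e(2) pfg qfg by auto
      have "f' = f \<or> f' = g" using e(3) uw madj_valid[OF b(3)] by blast
      then have "f' = f" using a b by auto
      moreover have "g' = f \<or> g' = g" using e(3) uw madj_valid[OF b(3)] by blast
      then have "g' = g" using a b by auto
      ultimately show "p = q" using pfg qfg by simp
    qed simp
  next
    fix p assume p: "p \<in> bp M"
    obtain f g where pfg: "p = (f,g)" by (cases p)
    have a: "f \<in> M" "g \<notin> M" "madj f g" using p pfg by (auto simp: bp_def)
    have vg: "valid g" "valid f" using madj_valid[OF a(3)] by auto
    have "mk f \<inter> mk g \<in> lattice_edges" using inter_edge[OF a(3)] .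
    moreover have "mk g \<in> faces" using faces_eq vg by blast
    moreover have "mk g \<notin> mk ` M" using mk_in_image[OF M vg(1)] a by simp
    moreover have "mk f \<in> mk ` M" using a(1) by blast
    ultimately have "mk f \<inter> mk g \<in> ?ES"
      apply (intro CollectI conjI)
       apply assumption
      apply (rule bexI[of _ "mk f"], rule bexI[of _ "mk g"])
      by auto
    then show "?h p \<in> ?ES" using pfg by simp
  next
    fix e assume "e \<in> ?ES"
    then obtain f G where e: "e \<in> lattice_edges" "f \<in> M" "G \<in> faces" "G \<notin> mk ` M" "e \<subseteq> mk f" "e \<subseteq> G"
      by blast
    obtain g where g: "valid g" "G = mk g" using e(3) faces_eq by blast
    have vf: "valid f" using e(2) M by auto
    have gM: "g \<notin> M" using e(4) g by auto
    have c2: "card e = 2" using e(1) by (simp add: lattice_edges_def)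
    then obtain u w where uw: "e = {u,w}" "u \<noteq> w" by (meson card_2_iff)
    have fg: "f \<noteq> g" using e(2) gM by auto
    have m: "madj f g" using share2_madj[OF vf g(1) fg uw(2)] e(5,6) g(2) uw(1) by auto
    have "e \<subseteq> mk f \<inter> mk g" using e(5,6) g by auto
    then have "e = mk f \<inter> mk g" using card_mk_inter[OF m] c2
      by (metis card.infinite card_subset_eq zero_neq_numeral)
    moreover have "(f,g) \<in> bp M" using e(2) gM m by (simp add: bp_def)
    ultimately show "\<exists>p\<in>bp M. e = ?h p" by (intro bexI[of _ "(f,g)"]) simp_all
  qed
  then have "card (bp M) = card ?ES" by (rule bij_betw_same_card)
  then show ?thesis unfolding edge_perimeter_def perim_def by simp
qed

lemma adjacent_mk: assumes "valid f" "valid g" shows "adjacent (mk f) (mk g) \<longleftrightarrow> madj f g"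
proof
  assume "adjacent (mk f) (mk g)"
  then obtain e where e: "mk f \<noteq> mk g" "e \<in> lattice_edges" "e \<subseteq> mk f" "e \<subseteq> mk g"
    by (auto simp: adjacent_def)
  have "card e = 2" using e(2) by (simp add: lattice_edges_def)
  then obtain u w where uw: "e = {u,w}" "u \<noteq> w" by (meson card_2_iff)
  show "madj f g" using share2_madj[OF assms _ uw(2)] e uw by auto
next
  assume m: "madj f g"
  have "mk f \<inter> mk g \<in> lattice_edges" using inter_edge[OF m] .
  moreover have "mk f \<noteq> mk g" using mk_inj[OF assms] madj_neq[OF m] by auto
  moreover have "mk f \<in> faces" "mk g \<in> faces" using mk_face assms by auto
  ultimately show "adjacent (mk f) (mk g)" unfolding adjacent_def
    by (intro conjI bexI[of _ "mk f \<inter> mk g"]) auto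
qed

lemma ec_eq: assumes M: "M \<subseteq> {f. valid f}" shows "edge_connected (mk ` M) \<longleftrightarrow> mconn M"
proof -
  let ?RD = "\<lambda>X Y. X \<in> mk ` M \<and> Y \<in> mk ` M \<and> adjacent X Y"
  let ?RM = "\<lambda>a b. a \<in> M \<and> b \<in> M \<and> madj a b"
  have rr: "?RD (mk a) (mk b) \<longleftrightarrow> ?RM a b" if "a \<in> M" "b \<in> M" for a b
    using that M adjacent_mk[of a b] by auto
  have fw: "?RD\<^sup>*\<^sup>* (mk a) (mk b)" if "?RM\<^sup>*\<^sup>* a b" for a b
    using that
  proof (induction rule: rtranclp_induct)
    case base then show ?case by simp
  next
    case (step y z)
    have "?RD (mk y) (mk z)" using rr[of y z] step(2) by blast
    then show ?case by (rule rtranclp.rtrancl_into_rtrancl[OF step(3)])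
  qed
  have bw: "\<forall>g. G = mk g \<longrightarrow> g \<in> M \<longrightarrow> ?RM\<^sup>*\<^sup>* f g" if "?RD\<^sup>*\<^sup>* (mk f) G" "f \<in> M" for f G
    using that(1)
  proof (induction rule: rtranclp_induct)
    case base
    show ?case
    proof (intro allI impI)
      fix g assume g: "mk f = mk g" "g \<in> M"
      have "f = g" using mk_inj[OF _ _ g(1)] M g(2) that(2) by blast
      then show "?RM\<^sup>*\<^sup>* f g" by simp
    qed
  next
    case (step y z)
    obtain a where a: "a \<in> M" "y = mk a" using step(2) by auto
    show ?case
    proof (intro allI impI)
      fix g assume g: "z = mk g" "g \<in> M"
      have "?RM a g" using rr a g step(2) by auto
      moreover have "?RM\<^sup>*\<^sup>* f a" using step(3) a by blast
      ultimately show "?RM\<^sup>*\<^sup>* f g" by (rule rtranclp.rtrancl_into_rtrancl[rotated])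
    qed
  qed
  show ?thesis unfolding edge_connected_def mconn_def
  proof (intro iffI ballI)
    fix f g assume H: "\<forall>F\<in>mk ` M. \<forall>G\<in>mk ` M. ?RD\<^sup>*\<^sup>* F G" and fg: "f \<in> M" "g \<in> M"
    then have "?RD\<^sup>*\<^sup>* (mk f) (mk g)" by blast
    then show "?RM\<^sup>*\<^sup>* f g" using bw fg by blast
  next
    fix F G assume H: "\<forall>f\<in>M. \<forall>g\<in>M. ?RM\<^sup>*\<^sup>* f g" and FG: "F \<in> mk ` M" "G \<in> mk ` M"
    then obtain f g where "f \<in> M" "g \<in> M" "F = mk f" "G = mk g" by blast
    then show "?RD\<^sup>*\<^sup>* F G" using H fw by blast
  qed
qed

lemma area_eq: "M \<subseteq> {f. valid f} \<Longrightarrow> area (mk ` M) = card M"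
  unfolding area_def using inj_mk by (meson card_image inj_on_subset)

lemma finite_mk_iff: "M \<subseteq> {f. valid f} \<Longrightarrow> finite (mk ` M) \<longleftrightarrow> finite M"
  using inj_mk by (meson finite_image_iff inj_on_subset)

lemma poly_eq: assumes "M \<subseteq> {f. valid f}"
  shows "polyiamond (mk ` M) \<longleftrightarrow> finite M \<and> M \<noteq> {} \<and> mconn M"
proof -
  have "mk ` M \<subseteq> faces" using assms faces_eq by blast
  then show ?thesis unfolding polyiamond_def using ec_eq[OF assms] finite_mk_iff[OF assms] by auto
qed

lemma faces_preimage: assumes "P \<subseteq> faces" shows "P = mk ` {f. valid f \<and> mk f \<in> P}"
proof
  show "P \<subseteq> mk ` {f. valid f \<and> mk f \<in> P}"
  proof
    fix x assume x: "x \<in> P"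
    then obtain f where "valid f" "x = mk f" using assms faces_eq by blast
    then show "x \<in> mk ` {f. valid f \<and> mk f \<in> P}" using x by blast
  qed
qed auto

lemma card_nbrs: "valid f \<Longrightarrow> card (nbrs f) = 3"
  by (cases f) (auto simp: valid_def nbrs_def)

lemma finite_nbrs[simp]: "finite (nbrs f)"
  by (cases f) (auto simp: nbrs_def)

lemma nbrs_sym: "valid f \<Longrightarrow> g \<in> nbrs f \<Longrightarrow> f \<in> nbrs g"
  using madj_sym[of f g] madj_def by auto

lemma finite_bp: assumes "finite M" shows "finite (bp M)"
proof -
  have "bp M \<subseteq> M \<times> (\<Union>f\<in>M. nbrs f)" by (auto simp: bp_def madj_def)
  then show ?thesis using assms by (meson finite_SigmaI finite_UN_I finite_nbrs rev_finite_subset)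
qed

lemma perim_insert:
  assumes M: "finite M" and vf: "valid f" and fM: "f \<notin> M"
  shows "int (perim (insert f M)) = int (perim M) + 3 - 2 * int (card (nbrs f \<inter> M))"
proof -
  define R where "R = (\<lambda>a. (a,f)) ` (nbrs f \<inter> M)"
  define Q where "Q = (\<lambda>b. (f,b)) ` (nbrs f - M)"
  have E: "bp (insert f M) = (bp M - R) \<union> Q"
  proof (rule set_eqI)
    fix p :: "tri \<times> tri"
    obtain a b where p: "p = (a,b)" by (cases p)
    show "p \<in> bp (insert f M) \<longleftrightarrow> p \<in> (bp M - R) \<union> Q"
    proof
      assume "p \<in> bp (insert f M)"
      then have h: "a \<in> insert f M" "b \<notin> insert f M" "madj a b" using p by (auto simp: bp_def)
      show "p \<in> (bp M - R) \<union> Q"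
      proof (cases "a = f")
        case True
        then have "b \<in> nbrs f - M" using h by (auto simp: madj_def)
        then show ?thesis using p True Q_def by auto
      next
        case False
        then show ?thesis using h p by (auto simp: bp_def R_def)
      qed
    next
      assume "p \<in> (bp M - R) \<union> Q"
      then show "p \<in> bp (insert f M)"
      proof
        assume "p \<in> bp M - R"
        then have h: "a \<in> M" "b \<notin> M" "madj a b" "(a,b) \<notin> R" using p by (auto simp: bp_def)
        have "b \<noteq> f"
        proof
          assume "b = f"
          then have "a \<in> nbrs f" using h(3) madj_sym madj_def by blast
          then show False using h \<open>b = f\<close> R_def by auto
        qed
        then show ?thesis using h p by (auto simp: bp_def)
      next
        assume "p \<in> Q"
        then have "a = f" "b \<in> nbrs f" "b \<notin> M" using p Q_def by auto
        moreover have "b \<noteq> f" using madj_neq[of f b] vf \<open>b \<in> nbrs f\<close> by (auto simp: madj_def)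
        ultimately show ?thesis using p vf by (auto simp: bp_def madj_def)
      qed
    qed
  qed
  have RS: "R \<subseteq> bp M"
  proof
    fix p assume "p \<in> R"
    then obtain a where a: "p = (a,f)" "a \<in> nbrs f" "a \<in> M" using R_def by auto
    have "madj a f" using madj_sym[of a f] vf a by (simp add: madj_def)
    then show "p \<in> bp M" using a fM by (simp add: bp_def)
  qed
  have fin: "finite (bp M)" using finite_bp[OF M] .
  have cR: "card R = card (nbrs f \<inter> M)" unfolding R_def by (rule card_image) (auto simp: inj_on_def)
  have cQ: "card Q = card (nbrs f - M)" unfolding Q_def by (rule card_image) (auto simp: inj_on_def)
  have disj: "(bp M - R) \<inter> Q = {}" using fM Q_def by (auto simp: bp_def)
  have "card (bp (insert f M)) = card (bp M - R) + card Q"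
    unfolding E using disj fin Q_def by (simp add: card_Un_disjoint)
  moreover have "card (bp M - R) = card (bp M) - card R" using RS fin by (meson card_Diff_subset finite_subset)
  moreover have "card R \<le> card (bp M)" using RS fin by (simp add: card_mono)
  moreover have "card (nbrs f \<inter> M) + card (nbrs f - M) = 3"
    using card_nbrs[OF vf] card_Int_Diff[of "nbrs f" M] by simp
  ultimately show ?thesis unfolding perim_def using cR cQ by linarith
qed

lemma perim_empty[simp]: "perim {} = 0"
  by (simp add: perim_def bp_def)

lemma perim_parity: "finite M \<Longrightarrow> M \<subseteq> {f. valid f} \<Longrightarrow> even (perim M + card M)"
proof (induction M rule: finite_induct)
  case empty then show ?case by simp
next
  case (insert f M)
  have "int (perim (insert f M)) = int (perim M) + 3 - 2 * int (card (nbrs f \<inter> M))"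
    using perim_insert insert by auto
  then have "even (int (perim (insert f M)) + int (perim M) + 1)" by presburger
  moreover have "even (int (perim M) + int (card M))" using insert by (metis even_of_nat of_nat_add subset_insertI subset_trans)
  ultimately have "even (int (perim (insert f M)) + int (card M) + 1)" by presburger
  then show ?case using insert by (simp add: even_of_nat)
qed

lemma mconn_insert: assumes "mconn M" "g \<in> M" "madj g f" shows "mconn (insert f M)"
proof -
  let ?R = "\<lambda>a b. a \<in> M \<and> b \<in> M \<and> madj a b"
  let ?R' = "\<lambda>a b. a \<in> insert f M \<and> b \<in> insert f M \<and> madj a b"
  have mono: "?R'\<^sup>*\<^sup>* a b" if "?R\<^sup>*\<^sup>* a b" for a b
    using that by (rule rtranclp_mono[THEN predicate2D, rotated]) auto
  have gf: "?R' g f" "?R' f g" using assms madj_sym by auto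
  have toG: "?R'\<^sup>*\<^sup>* a g" "?R'\<^sup>*\<^sup>* g a" if "a \<in> M" for a using assms(1) that assms(2) mono unfolding mconn_def by auto
  show ?thesis unfolding mconn_def
  proof (intro ballI)
    fix a b assume ab: "a \<in> insert f M" "b \<in> insert f M"
    have af: "?R'\<^sup>*\<^sup>* a g"
    proof (cases "a = f")
      case True then show ?thesis using gf(2) by (simp add: r_into_rtranclp)
    next
      case False then show ?thesis using ab(1) toG(1) by simp
    qed
    have fb: "?R'\<^sup>*\<^sup>* g b"
    proof (cases "b = f")
      case True then show ?thesis using gf(1) by (simp add: r_into_rtranclp)
    next
      case False then show ?thesis using ab(2) toG(2) by simp
    qed
    show "?R'\<^sup>*\<^sup>* a b" using af fb by (rule rtranclp_trans)
  qed
qed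

lemma mconn_single: "mconn {f}"
  by (simp add: mconn_def)

lemma mconn_empty: "mconn {}"
  by (simp add: mconn_def)

lemma mconn_interval:
  assumes "mconn M" "a \<in> M" "b \<in> M" "c a \<le> v" "v \<le> c b"
    and step: "\<And>x y. madj x y \<Longrightarrow> \<bar>c x - c y\<bar> \<le> (1::int)"
  shows "\<exists>z\<in>M. c z = v"
proof -
  let ?R = "\<lambda>a b. a \<in> M \<and> b \<in> M \<and> madj a b"
  have "?R\<^sup>*\<^sup>* a b" using assms unfolding mconn_def by blast
  then have "\<forall>v. c a \<le> v \<longrightarrow> v \<le> c b \<longrightarrow> (\<exists>z\<in>M. c z = v)"
  proof (induction rule: rtranclp_induct)
    case base then show ?case using assms(2) by force
  next
    case (step y z)
    show ?case
    proof (intro allI impI)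
      fix v assume v: "c a \<le> v" "v \<le> c z"
      show "\<exists>z\<in>M. c z = v"
      proof (cases "v \<le> c y")
        case True then show ?thesis using step v by blast
      next
        case False
        have "\<bar>c y - c z\<bar> \<le> 1" using step(2) assms(6) by blast
        then have "v = c z" using False v by linarith
        then show ?thesis using step(2) by blast
      qed
    qed
  qed
  then show ?thesis using assms(4,5) by blast
qed

lemma ex_max: fixes t :: "'a \<Rightarrow> int" assumes "finite S" "S \<noteq> {}"
  shows "\<exists>x\<in>S. \<forall>y\<in>S. t y \<le> t x"
proof -
  have "Max (t ` S) \<in> t ` S" using assms by simp
  then obtain x where "x \<in> S" "t x = Max (t ` S)" by auto
  then show ?thesis using assms by (metis Max_ge finite_imageI image_eqI)
qed

lemma ex_min: fixes t :: "'a \<Rightarrow> int" assumes "finite S" "S \<noteq> {}"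
  shows "\<exists>x\<in>S. \<forall>y\<in>S. t x \<le> t y"
proof -
  have "Min (t ` S) \<in> t ` S" using assms by simp
  then obtain x where "x \<in> S" "t x = Min (t ` S)" by auto
  then show ?thesis using assms by (metis Min_le finite_imageI image_eqI)
qed

lemma strip_bound:
  fixes c t :: "tri \<Rightarrow> int" and sc pc :: "tri \<Rightarrow> tri"
  assumes fin: "finite M" and val: "M \<subseteq> {f. valid f}"
    and hs: "\<And>f. valid f \<Longrightarrow> madj f (sc f) \<and> c (sc f) = c f \<and> t (sc f) = t f + 1"
    and hp: "\<And>f. valid f \<Longrightarrow> madj f (pc f) \<and> c (pc f) = c f \<and> t (pc f) = t f - 1"
  shows "2 * card (c ` M) \<le> card {p \<in> bp M. c (fst p) = c (snd p)}"
proof -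
  let ?E = "{p \<in> bp M. c (fst p) = c (snd p)}"
  have "\<forall>v\<in>c ` M. \<exists>fa. fa \<in> M \<and> c fa = v \<and> (fa, sc fa) \<in> ?E"
  proof
    fix v assume "v \<in> c ` M"
    then have ne: "{f\<in>M. c f = v} \<noteq> {}" by auto
    obtain fa where fa: "fa \<in> {f\<in>M. c f = v}" "\<forall>y\<in>{f\<in>M. c f = v}. t y \<le> t fa"
      using ex_max[OF _ ne, of t] fin by auto
    have v: "valid fa" using fa val by auto
    have "sc fa \<notin> M"
    proof
      assume "sc fa \<in> M"
      then have "sc fa \<in> {f\<in>M. c f = v}" using fa(1) hs[OF v] by simp
      then have "t (sc fa) \<le> t fa" using fa(2) by blast
      then show False using hs[OF v] by simp
    qed
    then have "fa \<in> M \<and> c fa = v \<and> (fa, sc fa) \<in> ?E" using fa hs[OF v] by (simp add: bp_def)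
    then show "\<exists>fa. fa \<in> M \<and> c fa = v \<and> (fa, sc fa) \<in> ?E" by blast
  qed
  from bchoice[OF this] obtain FA where FA: "\<forall>v\<in>c ` M. FA v \<in> M \<and> c (FA v) = v \<and> (FA v, sc (FA v)) \<in> ?E"
    by blast
  have "\<forall>v\<in>c ` M. \<exists>fb. fb \<in> M \<and> c fb = v \<and> (fb, pc fb) \<in> ?E"
  proof
    fix v assume "v \<in> c ` M"
    then have ne: "{f\<in>M. c f = v} \<noteq> {}" by auto
    obtain fb where fb: "fb \<in> {f\<in>M. c f = v}" "\<forall>y\<in>{f\<in>M. c f = v}. t fb \<le> t y"
      using ex_min[OF _ ne, of t] fin by auto
    have v: "valid fb" using fb val by auto
    have "pc fb \<notin> M"
    proof
      assume "pc fb \<in> M"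
      then have "pc fb \<in> {f\<in>M. c f = v}" using fb(1) hp[OF v] by simp
      then have "t fb \<le> t (pc fb)" using fb(2) by blast
      then show False using hp[OF v] by simp
    qed
    then have "fb \<in> M \<and> c fb = v \<and> (fb, pc fb) \<in> ?E" using fb hp[OF v] by (simp add: bp_def)
    then show "\<exists>fb. fb \<in> M \<and> c fb = v \<and> (fb, pc fb) \<in> ?E" by blast
  qed
  from bchoice[OF this] obtain FB where FB: "\<forall>v\<in>c ` M. FB v \<in> M \<and> c (FB v) = v \<and> (FB v, pc (FB v)) \<in> ?E"
    by blast
  define phi where "phi = (\<lambda>(v,b::bool). if b then (FA v, sc (FA v)) else (FB v, pc (FB v)))"
  have inj: "inj_on phi (c ` M \<times> UNIV)"
  proof (rule inj_onI)
    fix x y assume x: "x \<in> c ` M \<times> UNIV" and y: "y \<in> c ` M \<times> UNIV" and e: "phi x = phi y"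
    obtain v b where xv: "x = (v,b)" by (cases x)
    obtain w d where yw: "y = (w,d)" by (cases y)
    have vM: "v \<in> c ` M" and wM: "w \<in> c ` M" using x y xv yw by auto
    have "c (fst (phi x)) = v" using FA FB vM xv by (auto simp: phi_def)
    moreover have "c (fst (phi y)) = w" using FA FB wM yw by (auto simp: phi_def)
    ultimately have vw: "v = w" using e by simp
    have "b = d"
    proof (rule ccontr)
      assume "b \<noteq> d"
      then have "FA v = FB v \<and> sc (FA v) = pc (FB v)"
        using e xv yw vw by (cases b; cases d) (auto simp: phi_def)
      moreover have "valid (FA v)" using FA vM val by auto
      ultimately have "t (sc (FA v)) = t (FA v) + 1" "t (pc (FB v)) = t (FA v) - 1"
        "sc (FA v) = pc (FB v)" using hs[of "FA v"] hp[of "FA v"] by auto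
      then show False by simp
    qed
    then show "x = y" using xv yw vw by simp
  qed
  have sub: "phi ` (c ` M \<times> UNIV) \<subseteq> ?E"
  proof
    fix p assume "p \<in> phi ` (c ` M \<times> UNIV)"
    then obtain v b where vb: "v \<in> c ` M" "p = phi (v,b)" by auto
    show "p \<in> ?E"
    proof (cases b)
      case True then have "p = (FA v, sc (FA v))" using vb by (simp add: phi_def)
      then show ?thesis using bspec[OF FA vb(1)] by simp
    next
      case False then have "p = (FB v, pc (FB v))" using vb by (simp add: phi_def)
      then show ?thesis using bspec[OF FB vb(1)] by simp
    qed
  qed
  have finE: "finite ?E" using finite_bp[OF fin] by simp
  have "card (c ` M \<times> (UNIV :: bool set)) \<le> card ?E"
    using card_inj_on_le[OF inj sub finE] .
  moreover have "card (c ` M \<times> (UNIV :: bool set)) = 2 * card (c ` M)"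
    by (simp add: card_cartesian_product)
  ultimately show ?thesis by simp
qed

definition cX :: "tri \<Rightarrow> int" where "cX f = fst f"
definition cY :: "tri \<Rightarrow> int" where "cY f = fst (snd f)"
definition cS :: "tri \<Rightarrow> int" where "cS f = snd (snd f)"

lemma stripX: "finite M \<Longrightarrow> M \<subseteq> {f. valid f} \<Longrightarrow> 2 * card (cX ` M) \<le> card {p \<in> bp M. cX (fst p) = cX (snd p)}"
  apply (rule strip_bound[where t = "\<lambda>(X,Y,S). Y + S"
    and sc = "\<lambda>(X,Y,S). if S = X + Y then (X,Y,S+1) else (X,Y+1,S)"
    and pc = "\<lambda>(X,Y,S). if S = X + Y then (X,Y-1,S) else (X,Y,S-1)"])
  by (auto simp: cX_def madj_def nbrs_def valid_def)

lemma stripY: "finite M \<Longrightarrow> M \<subseteq> {f. valid f} \<Longrightarrow> 2 * card (cY ` M) \<le> card {p \<in> bp M. cY (fst p) = cY (snd p)}"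
  apply (rule strip_bound[where t = "\<lambda>(X,Y,S). X + S"
    and sc = "\<lambda>(X,Y,S). if S = X + Y then (X,Y,S+1) else (X+1,Y,S)"
    and pc = "\<lambda>(X,Y,S). if S = X + Y then (X-1,Y,S) else (X,Y,S-1)"])
  by (auto simp: cY_def madj_def nbrs_def valid_def)

lemma stripS: "finite M \<Longrightarrow> M \<subseteq> {f. valid f} \<Longrightarrow> 2 * card (cS ` M) \<le> card {p \<in> bp M. cS (fst p) = cS (snd p)}"
  apply (rule strip_bound[where t = "\<lambda>(X,Y,S). X - Y"
    and sc = "\<lambda>(X,Y,S). if S = X + Y then (X,Y-1,S) else (X+1,Y,S)"
    and pc = "\<lambda>(X,Y,S). if S = X + Y then (X-1,Y,S) else (X,Y+1,S)"])
  by (auto simp: cS_def madj_def nbrs_def valid_def)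

lemma madj_two_eq: "madj f g \<Longrightarrow>
   of_bool (cX f = cX g) + of_bool (cY f = cY g) + of_bool (cS f = cS g) = (2::nat)"
  by (cases f) (auto simp: madj_def nbrs_def cX_def cY_def cS_def split: if_splits)

lemma card_filter_sum: "finite A \<Longrightarrow> card {p \<in> A. P p} = (\<Sum>p\<in>A. of_bool (P p))"
  apply simp
  by (simp add: Int_def)

lemma sum_strips: assumes "finite M"
  shows "card {p \<in> bp M. cX (fst p) = cX (snd p)} + card {p \<in> bp M. cY (fst p) = cY (snd p)}
       + card {p \<in> bp M. cS (fst p) = cS (snd p)} = 2 * perim M"
proof -
  have fin: "finite (bp M)" using finite_bp[OF assms] .
  have "(\<Sum>p\<in>bp M. of_bool (cX (fst p) = cX (snd p)) + of_bool (cY (fst p) = cY (snd p))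
           + of_bool (cS (fst p) = cS (snd p))) = (\<Sum>p\<in>bp M. (2::nat))"
  proof (rule sum.cong[OF refl])
    fix p assume "p \<in> bp M"
    then obtain f g where "p = (f,g)" "madj f g" by (auto simp: bp_def)
    then show "of_bool (cX (fst p) = cX (snd p)) + of_bool (cY (fst p) = cY (snd p))
           + of_bool (cS (fst p) = cS (snd p)) = (2::nat)" using madj_two_eq[of f g] by simp
  qed
  then show ?thesis using fin by (simp add: card_filter_sum sum.distrib perim_def)
qed

lemma perim_ge_strips: assumes "finite M" "M \<subseteq> {f. valid f}"
  shows "card (cX ` M) + card (cY ` M) + card (cS ` M) \<le> perim M"
  using stripX[OF assms] stripY[OF assms] stripS[OF assms] sum_strips[OF assms(1)] by linarith

definition triS :: "int \<Rightarrow> tri set" where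
  "triS t = {f. valid f \<and> 0 \<le> cX f \<and> 0 \<le> cY f \<and> cS f < t}"

lemma layer_card: assumes "0 \<le> t"
  shows "card {f. valid f \<and> 0 \<le> cX f \<and> 0 \<le> cY f \<and> cS f = t} = nat (2*t+1)"
proof -
  let ?L = "{f. valid f \<and> 0 \<le> cX f \<and> 0 \<le> cY f \<and> cS f = t}"
  have E: "?L = (\<lambda>x. (x, t-x, t)) ` {0..t} \<union> (\<lambda>x. (x, t-1-x, t)) ` {0..t-1}"
  proof (rule set_eqI)
    fix f :: tri
    obtain X Y S where f: "f = (X,Y,S)" by (cases f)
    show "f \<in> ?L \<longleftrightarrow> f \<in> (\<lambda>x. (x, t-x, t)) ` {0..t} \<union> (\<lambda>x. (x, t-1-x, t)) ` {0..t-1}"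
      unfolding f by (auto simp: valid_def cX_def cY_def cS_def image_iff)
  qed
  have d: "(\<lambda>x. (x, t-x, t)) ` {0..t} \<inter> (\<lambda>x. (x, t-1-x, t)) ` {0..t-1} = {}" by auto
  have c1: "card ((\<lambda>x. (x, t-x, t)) ` {0..t}) = nat (t+1)"
    by (subst card_image) (auto simp: inj_on_def)
  have c2: "card ((\<lambda>x. (x, t-1-x, t)) ` {0..t-1}) = nat t"
    by (subst card_image) (auto simp: inj_on_def)
  show ?thesis unfolding E using d c1 c2 assms by (simp add: card_Un_disjoint)
qed

lemma triS_card: "card (triS (int k)) = k * k"
proof (induction k)
  case 0
  have "triS 0 = {}" by (auto simp: triS_def valid_def cX_def cY_def cS_def)
  then show ?case by simp
next
  case (Suc k)
  let ?L = "{f. valid f \<and> 0 \<le> cX f \<and> 0 \<le> cY f \<and> cS f = int k}"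
  have E: "triS (int (Suc k)) = triS (int k) \<union> ?L" by (auto simp: triS_def)
  have d: "triS (int k) \<inter> ?L = {}" by (auto simp: triS_def)
  have fin: "finite (triS (int k))"
  proof -
    have "triS (int k) \<subseteq> {0..int k} \<times> {0..int k} \<times> {0..int k}"
      by (auto simp: triS_def valid_def cX_def cY_def cS_def)
    then show ?thesis by (rule finite_subset) auto
  qed
  have finL: "finite ?L"
  proof -
    have "?L \<subseteq> {0..int k} \<times> {0..int k} \<times> {0..int k}"
      by (auto simp: valid_def cX_def cY_def cS_def)
    then show ?thesis by (rule finite_subset) auto
  qed
  have "card (triS (int (Suc k))) = k*k + nat (2 * int k + 1)"
    unfolding E using card_Un_disjoint[OF fin finL d] Suc layer_card[of "int k"] by simp
  then show ?case by (simp add: nat_add_distrib nat_mult_distrib)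
qed

lemma triS_card_int: "0 \<le> t \<Longrightarrow> int (card (triS t)) = t * t"
  using triS_card[of "nat t"] by simp

definition boxN :: "int \<Rightarrow> int \<Rightarrow> int \<Rightarrow> int \<Rightarrow> tri set" where
  "boxN n m a d = {f. valid f \<and> 0 \<le> cX f \<and> cX f < n \<and> 0 \<le> cY f \<and> cY f < m \<and> a \<le> cS f \<and> cS f < d}"

lemma full_card: assumes "0 \<le> n" "0 \<le> m"
  shows "int (card {f. valid f \<and> 0 \<le> cX f \<and> cX f < n \<and> 0 \<le> cY f \<and> cY f < m}) = 2 * n * m"
proof -
  let ?F = "{f. valid f \<and> 0 \<le> cX f \<and> cX f < n \<and> 0 \<le> cY f \<and> cY f < m}"
  let ?g = "\<lambda>(x,y,e). (x, y, x + y + e) :: tri"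
  have E: "?F = ?g ` ({0..<n} \<times> {0..<m} \<times> {0,1})"
  proof (rule set_eqI)
    fix f :: tri
    obtain X Y S where f: "f = (X,Y,S)" by (cases f)
    show "f \<in> ?F \<longleftrightarrow> f \<in> ?g ` ({0..<n} \<times> {0..<m} \<times> {0,1})"
    proof
      assume "f \<in> ?F"
      then have "X \<in> {0..<n}" "Y \<in> {0..<m}" "S - X - Y \<in> {0,1}" "f = ?g (X, Y, S - X - Y)"
        using f by (auto simp: valid_def cX_def cY_def)
      then show "f \<in> ?g ` ({0..<n} \<times> {0..<m} \<times> {0,1})" by blast
    qed (auto simp: f valid_def cX_def cY_def)
  qed
  have inj: "inj_on ?g ({0..<n} \<times> {0..<m} \<times> {0,1})" by (auto simp: inj_on_def)
  have "card ?F = nat n * nat m * 2" unfolding E card_image[OF inj] by (simp add: card_cartesian_product)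
  then show ?thesis using assms by simp
qed

lemma boxN_card:
  assumes "0 \<le> a" "a \<le> n" "a \<le> m" "n \<le> d" "m \<le> d" "d \<le> n + m"
  shows "int (card (boxN n m a d)) = 2*n*m - a*a - (n+m-d)*(n+m-d)"
proof -
  let ?F = "{f. valid f \<and> 0 \<le> cX f \<and> cX f < n \<and> 0 \<le> cY f \<and> cY f < m}"
  let ?T1 = "{f \<in> ?F. cS f < a}"
  let ?T2 = "{f \<in> ?F. d \<le> cS f}"
  have finF: "finite ?F"
  proof -
    have "?F \<subseteq> {0..n} \<times> {0..m} \<times> {0..n+m}"
      by (auto simp: valid_def cX_def cY_def)
    then show ?thesis by (rule finite_subset) auto
  qed
  have E: "boxN n m a d = ?F - ?T1 - ?T2" by (auto simp: boxN_def)
  have finT1: "finite ?T1" using finF by (rule rev_finite_subset) auto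
  have finT2: "finite ?T2" using finF by (rule rev_finite_subset) auto
  have T1: "?T1 = triS a"
    using assms by (auto simp: triS_def valid_def cX_def cY_def cS_def)
  let ?r = "\<lambda>(X,Y,S). (n-1-X, m-1-Y, n+m-1-S) :: tri"
  have rr: "?r (?r f) = f" for f by (cases f) simp
  have T2: "?r ` ?T2 = triS (n+m-d)"
  proof (rule set_eqI)
    fix f :: tri
    obtain X Y S where f: "f = (X,Y,S)" by (cases f)
    have "f \<in> ?r ` ?T2 \<longleftrightarrow> ?r f \<in> ?T2"
      by (metis (no_types, lifting) image_eqI imageE rr)
    also have "\<dots> \<longleftrightarrow> f \<in> triS (n+m-d)"
      using assms unfolding f by (auto simp: triS_def valid_def cX_def cY_def cS_def)
    finally show "f \<in> ?r ` ?T2 \<longleftrightarrow> f \<in> triS (n+m-d)" .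
  qed
  have injr: "inj_on ?r ?T2" by (metis (no_types, lifting) inj_on_inverseI rr)
  have cT2: "card ?T2 = card (triS (n+m-d))" using card_image[OF injr] T2 by simp
  have "card (?F - ?T1 - ?T2) = card ?F - card ?T1 - card ?T2"
  proof -
    have "card (?F - ?T1) = card ?F - card ?T1" using finT1 by (intro card_Diff_subset) auto
    moreover have "?T2 \<subseteq> ?F - ?T1" using assms by auto
    ultimately show ?thesis using finF by (simp add: card_Diff_subset finite_subset)
  qed
  moreover have "card ?T1 + card ?T2 \<le> card ?F"
  proof -
    have "card (?T1 \<union> ?T2) = card ?T1 + card ?T2" using finT1 finT2 assms by (intro card_Un_disjoint) auto
    moreover have "card (?T1 \<union> ?T2) \<le> card ?F" using finF by (intro card_mono) auto
    ultimately show ?thesis by simp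
  qed
  ultimately have "int (card (boxN n m a d)) = int (card ?F) - int (card ?T1) - int (card ?T2)"
    unfolding E by simp
  then show ?thesis using full_card[of n m] triS_card_int[of a] triS_card_int[of "n+m-d"] T1 cT2 assms
    by simp
qed

lemma key_ineq: fixes n m a d :: int
  shows "6*(2*n*m - a*a - (n+m-d)*(n+m-d)) \<le> (n+m+d-a)^2"
proof -
  have "(n+m+d-a)^2 - 6*(2*n*m - a*a - (n+m-d)*(n+m-d)) =
     3*(d-a-(d-n)-(d-m))^2 + 2*((a-(d-n))^2 + ((d-n)-(d-m))^2 + ((d-m)-a)^2)"
    by (simp add: power2_eq_square algebra_simps)
  moreover have "0 \<le> 3*(d-a-(d-n)-(d-m))^2 + 2*((a-(d-n))^2 + ((d-n)-(d-m))^2 + ((d-m)-a)^2)"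
    by simp
  ultimately show ?thesis by linarith
qed

lemma madj_steps: "madj f g \<Longrightarrow> \<bar>cX f - cX g\<bar> \<le> 1 \<and> \<bar>cY f - cY g\<bar> \<le> 1 \<and> \<bar>cS f - cS g\<bar> \<le> 1"
  by (cases f) (auto simp: madj_def nbrs_def cX_def cY_def cS_def split: if_splits)

lemma madj_cases: "madj f g \<Longrightarrow> cS f = cX f + cY f \<or> cS f = cX f + cY f + 1"
  by (cases f) (auto simp: madj_def valid_def cX_def cY_def cS_def)

lemma ex_Min: assumes "finite M" "M \<noteq> {}" shows "\<exists>a\<in>M. (c::tri\<Rightarrow>int) a = Min (c ` M)"
proof -
  have "Min (c ` M) \<in> c ` M" using assms by simp
  then show ?thesis by (auto simp: image_iff)
qed

lemma ex_Max: assumes "finite M" "M \<noteq> {}" shows "\<exists>a\<in>M. (c::tri\<Rightarrow>int) a = Max (c ` M)"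
proof -
  have "Max (c ` M) \<in> c ` M" using assms by simp
  then show ?thesis by (auto simp: image_iff)
qed

lemma card_range:
  fixes c :: "tri \<Rightarrow> int"
  assumes fin: "finite M" and ne: "M \<noteq> {}" and mc: "mconn M"
    and st: "\<And>x y. madj x y \<Longrightarrow> \<bar>c x - c y\<bar> \<le> 1"
  shows "Max (c ` M) - Min (c ` M) + 1 \<le> int (card (c ` M))"
proof -
  obtain a where a: "a \<in> M" "c a = Min (c ` M)" using ex_Min[OF fin ne] by blast
  obtain b where b: "b \<in> M" "c b = Max (c ` M)" using ex_Max[OF fin ne] by blast
  have "{Min (c ` M)..Max (c ` M)} \<subseteq> c ` M"
  proof
    fix v assume "v \<in> {Min (c ` M)..Max (c ` M)}"
    then obtain z where "z \<in> M" "c z = v" using mconn_interval[OF mc a(1) b(1), of c v] a b st by auto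
    then show "v \<in> c ` M" by blast
  qed
  then have h: "card {Min (c ` M)..Max (c ` M)} \<le> card (c ` M)" using fin by (intro card_mono) auto
  have "Min (c ` M) \<le> Max (c ` M)" using fin ne by simp
  then have "int (card {Min (c ` M)..Max (c ` M)}) = Max (c ` M) - Min (c ` M) + 1" by simp
  then show ?thesis using h by linarith
qed

lemma iso: assumes fin: "finite M" and ne: "M \<noteq> {}" and val: "M \<subseteq> {f. valid f}" and mc: "mconn M"
  shows "6 * int (card M) \<le> (int (perim M))^2"
proof -
  define x0 where "x0 = Min (cX ` M)"
  define x1 where "x1 = Max (cX ` M)"
  define y0 where "y0 = Min (cY ` M)"
  define y1 where "y1 = Max (cY ` M)"
  define s0 where "s0 = Min (cS ` M)"
  define s1 where "s1 = Max (cS ` M)"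
  have rX: "x1 - x0 + 1 \<le> int (card (cX ` M))" unfolding x0_def x1_def
    using card_range[OF fin ne mc] madj_steps by blast
  have rY: "y1 - y0 + 1 \<le> int (card (cY ` M))" unfolding y0_def y1_def
    using card_range[OF fin ne mc] madj_steps by blast
  have rS: "s1 - s0 + 1 \<le> int (card (cS ` M))" unfolding s0_def s1_def
    using card_range[OF fin ne mc] madj_steps by blast
  have pg: "card (cX ` M) + card (cY ` M) + card (cS ` M) \<le> perim M" using perim_ge_strips[OF fin val] .
  have bX: "x0 \<le> cX f" "cX f \<le> x1" if "f \<in> M" for f using that fin unfolding x0_def x1_def by auto
  have bY: "y0 \<le> cY f" "cY f \<le> y1" if "f \<in> M" for f using that fin unfolding y0_def y1_def by auto
  have bS: "s0 \<le> cS f" "cS f \<le> s1" if "f \<in> M" for f using that fin unfolding s0_def s1_def by auto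
  have vS: "cX f + cY f \<le> cS f" "cS f \<le> cX f + cY f + 1" if "f \<in> M" for f
    using that val by (cases f, auto simp: valid_def cX_def cY_def cS_def)+
  obtain fx0 where fx0: "fx0 \<in> M" "cX fx0 = x0" unfolding x0_def using ex_Min[OF fin ne] by blast
  obtain fx1 where fx1: "fx1 \<in> M" "cX fx1 = x1" unfolding x1_def using ex_Max[OF fin ne] by blast
  obtain fy0 where fy0: "fy0 \<in> M" "cY fy0 = y0" unfolding y0_def using ex_Min[OF fin ne] by blast
  obtain fy1 where fy1: "fy1 \<in> M" "cY fy1 = y1" unfolding y1_def using ex_Max[OF fin ne] by blast
  obtain fs0 where fs0: "fs0 \<in> M" "cS fs0 = s0" unfolding s0_def using ex_Min[OF fin ne] by blast
  obtain fs1 where fs1: "fs1 \<in> M" "cS fs1 = s1" unfolding s1_def using ex_Max[OF fin ne] by blast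
  define n where "n = x1 - x0 + 1"
  define m where "m = y1 - y0 + 1"
  define a where "a = s0 - x0 - y0"
  define d where "d = s1 + 1 - x0 - y0"
  have c1: "0 \<le> a" using vS[OF fs0(1)] bX[OF fs0(1)] bY[OF fs0(1)] fs0 unfolding a_def by linarith
  have c2: "a \<le> n" using vS[OF fy0(1)] bX[OF fy0(1)] bS[OF fy0(1)] fy0 unfolding a_def n_def by linarith
  have c3: "a \<le> m" using vS[OF fx0(1)] bY[OF fx0(1)] bS[OF fx0(1)] fx0 unfolding a_def m_def by linarith
  have c4: "n \<le> d" using vS[OF fx1(1)] bY[OF fx1(1)] bS[OF fx1(1)] fx1 unfolding d_def n_def by linarith
  have c5: "m \<le> d" using vS[OF fy1(1)] bX[OF fy1(1)] bS[OF fy1(1)] fy1 unfolding d_def m_def by linarith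
  have c6: "d \<le> n + m" using vS[OF fs1(1)] bX[OF fs1(1)] bY[OF fs1(1)] fs1 unfolding d_def n_def m_def by linarith
  let ?B = "{f. valid f \<and> x0 \<le> cX f \<and> cX f \<le> x1 \<and> y0 \<le> cY f \<and> cY f \<le> y1 \<and> s0 \<le> cS f \<and> cS f \<le> s1}"
  have sub: "M \<subseteq> ?B" using val bX bY bS by auto
  let ?t = "\<lambda>(X,Y,S). (X - x0, Y - y0, S - x0 - y0) :: tri"
  let ?ti = "\<lambda>(X,Y,S). (X + x0, Y + y0, S + x0 + y0) :: tri"
  have tt: "?ti (?t f) = f" "?t (?ti f) = f" for f by (cases f, simp)+
  have inj: "inj_on ?t ?B" by (metis (no_types, lifting) inj_on_inverseI tt(1))
  have img: "?t ` ?B = boxN n m a d"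
  proof (rule set_eqI)
    fix f :: tri
    have "f \<in> ?t ` ?B \<longleftrightarrow> ?ti f \<in> ?B" by (metis (no_types, lifting) image_eqI imageE tt)
    also have "\<dots> \<longleftrightarrow> f \<in> boxN n m a d"
      by (cases f) (auto simp: boxN_def valid_def cX_def cY_def cS_def n_def m_def a_def d_def)
    finally show "f \<in> ?t ` ?B \<longleftrightarrow> f \<in> boxN n m a d" .
  qed
  have finB: "finite ?B"
  proof -
    have "?B \<subseteq> {x0..x1} \<times> {y0..y1} \<times> {s0..s1}" by (auto simp: cX_def cY_def cS_def)
    then show ?thesis by (rule finite_subset) auto
  qed
  have "card M \<le> card ?B" using sub finB by (rule card_mono[rotated])
  also have "\<dots> = card (boxN n m a d)" using card_image[OF inj] img by simp
  finally have cM: "int (card M) \<le> 2*n*m - a*a - (n+m-d)*(n+m-d)"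
    using boxN_card[OF c1 c2 c3 c4 c5 c6] by linarith
  have "n + m + d - a \<le> int (perim M)" using rX rY rS pg unfolding n_def m_def d_def a_def by linarith
  moreover have "0 \<le> n + m + d - a" using c1 c2 c4 c6 by linarith
  ultimately have "(n + m + d - a)^2 \<le> (int (perim M))^2" by (simp add: power_mono)
  moreover have "6 * int (card M) \<le> 6*(2*n*m - a*a - (n+m-d)*(n+m-d))" using mult_left_mono[OF cM, of 6] by simp
  ultimately show ?thesis using key_ineq[of n m a d] by (meson order_trans)
qed

definition boxI :: "int \<Rightarrow> int \<Rightarrow> int \<Rightarrow> int \<Rightarrow> int \<Rightarrow> int \<Rightarrow> tri set" where
  "boxI x0 x1 y0 y1 s0 s1 = {f. valid f \<and> x0 \<le> cX f \<and> cX f < x1 \<and> y0 \<le> cY f \<and> cY f < y1 \<and> s0 \<le> cS f \<and> cS f < s1}"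

lemma finite_boxI: "finite (boxI x0 x1 y0 y1 s0 s1)"
proof -
  have "boxI x0 x1 y0 y1 s0 s1 \<subseteq> {x0..x1} \<times> {y0..y1} \<times> {s0..s1}" by (auto simp: boxI_def cX_def cY_def cS_def)
  then show ?thesis by (rule finite_subset) auto
qed

lemma boxI_valid: "boxI x0 x1 y0 y1 s0 s1 \<subseteq> {f. valid f}"
  by (auto simp: boxI_def)

locale canon =
  fixes x0 x1 y0 y1 s0 s1 :: int
  assumes c1: "x0 + 2 \<le> x1" and c2: "x0 + y0 + 1 \<le> s0" and c3: "x0 + y1 + 1 \<le> s1" and c4: "s0 \<le> x0 + y1"
begin

definition "Kh = x0 + y1 - s0"
definition "dn i = (x0, s0 - x0 - 1 + i, s0 + i)"
definition "upf i = (x0, s0 - x0 + i, s0 + i)"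
definition "B = boxI x0 x1 y0 y1 s0 s1"
definition "B' = boxI (x0+1) x1 y0 y1 s0 s1"
definition "Lay k = {dn i | i. 0 \<le> i \<and> 2*i+1 \<le> k} \<union> {upf i | i. 0 \<le> i \<and> 2*i+2 \<le> k}"
definition "Pk k = B' \<union> Lay k"

lemma Kh_nn: "0 \<le> Kh" using c4 by (simp add: Kh_def)

lemma valid_dn[simp]: "valid (dn i)" and valid_upf[simp]: "valid (upf i)"
  by (auto simp: dn_def upf_def valid_def)

lemma nbrs_dn: "nbrs (dn i) = {upf (i-1), upf i, (x0+1, s0 - x0 - 1 + i, s0 + i)}"
  by (auto simp: dn_def upf_def nbrs_def)

lemma nbrs_upf: "nbrs (upf i) = {dn (i+1), dn i, (x0 - 1, s0 - x0 + i, s0 + i)}"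
  by (auto simp: dn_def upf_def nbrs_def)

lemma dn_inj[simp]: "dn i = dn j \<longleftrightarrow> i = j" and upf_inj[simp]: "upf i = upf j \<longleftrightarrow> i = j"
  and dn_upf[simp]: "dn i \<noteq> upf j" "upf j \<noteq> dn i"
  by (auto simp: dn_def upf_def)

lemma cX_layer[simp]: "cX (dn i) = x0" "cX (upf i) = x0"
  by (auto simp: dn_def upf_def cX_def)

lemma B'_X: "f \<in> B' \<Longrightarrow> x0 + 1 \<le> cX f"
  by (auto simp: B'_def boxI_def)

lemma dn_notB'[simp]: "dn i \<notin> B'"
  using B'_X[of "dn i"] by auto
lemma upf_notB'[simp]: "upf i \<notin> B'"
  using B'_X[of "upf i"] by auto

lemma mem_Lay_dn: "dn i \<in> Lay k \<longleftrightarrow> 0 \<le> i \<and> 2*i+1 \<le> k"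
  by (auto simp: Lay_def)
lemma mem_Lay_upf: "upf i \<in> Lay k \<longleftrightarrow> 0 \<le> i \<and> 2*i+2 \<le> k"
  by (auto simp: Lay_def)

lemma Pk0: "Pk 0 = B'"
  by (auto simp: Pk_def Lay_def)

lemma Pk_odd: "0 \<le> i \<Longrightarrow> Pk (2*i+1) = insert (dn i) (Pk (2*i))"
  by (auto simp: Pk_def Lay_def; presburger)

lemma Pk_even: "0 \<le> i \<Longrightarrow> Pk (2*i+2) = insert (upf i) (Pk (2*i+1))"
  by (auto simp: Pk_def Lay_def)

lemma finite_Lay: "finite (Lay k)"
proof -
  have "Lay k \<subseteq> dn ` {0..k} \<union> upf ` {0..k}" by (auto simp: Lay_def)
  then show ?thesis by (rule finite_subset) auto
qed

lemma finite_Pk: "finite (Pk k)"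
  using finite_Lay finite_boxI by (simp add: Pk_def B'_def)

lemma o_in_B': "0 \<le> i \<Longrightarrow> i \<le> Kh \<Longrightarrow> (x0+1, s0 - x0 - 1 + i, s0 + i) \<in> B'"
  using c1 c2 c3 by (auto simp: B'_def boxI_def Kh_def valid_def cX_def cY_def cS_def)

lemma o_notin: "(x0 - 1, s0 - x0 + i, s0 + i) \<notin> Pk k"
proof -
  have "(x0 - 1, s0 - x0 + i, s0 + i) \<notin> B'" using B'_X by (force simp: cX_def)
  moreover have "(x0 - 1, s0 - x0 + i, s0 + i) \<notin> Lay k" by (auto simp: Lay_def dn_def upf_def)
  ultimately show ?thesis by (simp add: Pk_def)
qed

lemma dn_notin_Pk: "dn i \<notin> Pk (2*i)"
  by (simp add: Pk_def mem_Lay_dn)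
lemma upf_notin_Pk: "upf i \<notin> Pk (2*i+1)"
  by (simp add: Pk_def mem_Lay_upf)

lemma card_int_dn: assumes "0 \<le> i" "i \<le> Kh"
  shows "card (nbrs (dn i) \<inter> Pk (2*i)) = (if i = 0 then 1 else 2)"
proof -
  have o: "(x0+1, s0 - x0 - 1 + i, s0 + i) \<in> Pk (2*i)" using o_in_B' assms by (simp add: Pk_def)
  have u: "upf i \<notin> Pk (2*i)" by (simp add: Pk_def mem_Lay_upf)
  have u1: "upf (i-1) \<in> Pk (2*i) \<longleftrightarrow> i \<noteq> 0" using assms by (auto simp: Pk_def mem_Lay_upf)
  have ne: "upf (i-1) \<noteq> (x0+1, s0 - x0 - 1 + i, s0 + i)" by (simp add: upf_def)
  show ?thesis
  proof (cases "i = 0")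
    case True
    then have "nbrs (dn i) \<inter> Pk (2*i) = {(x0+1, s0 - x0 - 1 + i, s0 + i)}"
      using o u u1 unfolding nbrs_dn by auto
    then show ?thesis using True by simp
  next
    case False
    then have "nbrs (dn i) \<inter> Pk (2*i) = {upf (i-1), (x0+1, s0 - x0 - 1 + i, s0 + i)}"
      using o u u1 unfolding nbrs_dn by auto
    then show ?thesis using False ne by simp
  qed
qed

lemma card_int_upf: assumes "0 \<le> i"
  shows "card (nbrs (upf i) \<inter> Pk (2*i+1)) = 1"
proof -
  have "dn i \<in> Pk (2*i+1)" using assms by (simp add: Pk_def mem_Lay_dn)
  moreover have "dn (i+1) \<notin> Pk (2*i+1)" by (simp add: Pk_def mem_Lay_dn)
  ultimately have "nbrs (upf i) \<inter> Pk (2*i+1) = {dn i}" using o_notin[of i "2*i+1"] unfolding nbrs_upf by auto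
  then show ?thesis by simp
qed

lemma perim_steps: fixes i :: nat
  shows "(2*int i+1 \<le> 2*Kh+1 \<longrightarrow> int (perim (Pk (2*int i+1))) = int (perim B') + 1)
       \<and> (2*int i+2 \<le> 2*Kh+1 \<longrightarrow> int (perim (Pk (2*int i+2))) = int (perim B') + 2)"
proof (induction i)
  case 0
  have a: "int (perim (Pk 1)) = int (perim B') + 1"
    using perim_insert[OF finite_Pk valid_dn dn_notin_Pk, of 0] card_int_dn[of 0] Kh_nn Pk_odd[of 0] Pk0
    by simp
  moreover have "int (perim (Pk 2)) = int (perim B') + 2" if "2 \<le> 2*Kh+1"
  proof -
    have "int (perim (Pk 2)) = int (perim (Pk 1)) + 3 - 2 * 1"
      using perim_insert[OF finite_Pk valid_upf upf_notin_Pk, of 0] card_int_upf[of 0] Pk_even[of 0] by simp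
    then show ?thesis using a by simp
  qed
  ultimately show ?case by simp
next
  case (Suc i)
  let ?j = "int i + 1"
  have j: "int (Suc i) = ?j" by simp
  have A: "int (perim (Pk (2*?j+1))) = int (perim B') + 1" if h: "2 * int (Suc i) + 1 \<le> 2 * Kh + 1"
  proof -
    have "int (perim (Pk (2*?j+1))) = int (perim (Pk (2*?j))) + 3 - 2 * 2"
      using perim_insert[OF finite_Pk valid_dn dn_notin_Pk, of ?j] card_int_dn[of ?j] h Pk_odd[of ?j] by simp
    moreover have "2*?j = 2*int i + 2" by simp
    ultimately show ?thesis using Suc h by simp
  qed
  show ?case
  proof (intro conjI impI)
    assume h: "2 * int (Suc i) + 1 \<le> 2 * Kh + 1"
    show "int (perim (Pk (2 * int (Suc i) + 1))) = int (perim B') + 1" using A[OF h] by simp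
  next
    assume h2: "2 * int (Suc i) + 2 \<le> 2 * Kh + 1"
    have "int (perim (Pk (2*?j+2))) = int (perim (Pk (2*?j+1))) + 3 - 2 * 1"
      using perim_insert[OF finite_Pk valid_upf upf_notin_Pk, of ?j] card_int_upf[of ?j] Pk_even[of ?j] by simp
    then show "int (perim (Pk (2 * int (Suc i) + 2))) = int (perim B') + 2" using A h2 by simp
  qed
qed


definition "nf k = (if even k then dn (k div 2) else upf (k div 2))"

lemma Lay_odd: "0 \<le> i \<Longrightarrow> Lay (2*i+1) = insert (dn i) (Lay (2*i))"
  by (auto simp: Lay_def; presburger)
lemma Lay_even: "0 \<le> i \<Longrightarrow> Lay (2*i+2) = insert (upf i) (Lay (2*i+1))"
  by (auto simp: Lay_def)

lemma Pk_suc: assumes "0 \<le> k" shows "Pk (k+1) = insert (nf k) (Pk k)"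
proof (cases "even k")
  case True
  then obtain i where i: "k = 2*i" by (metis evenE)
  then show ?thesis using Pk_odd[of i] assms True by (simp add: nf_def)
next
  case False
  then obtain i where i: "k = 2*i+1" by (metis oddE)
  then have "k + 1 = 2*i+2" by simp
  then show ?thesis using Pk_even[of i] assms False i by (simp add: nf_def add.commute)
qed

lemma Lay_suc: assumes "0 \<le> k" shows "Lay (k+1) = insert (nf k) (Lay k)"
proof (cases "even k")
  case True
  then obtain i where i: "k = 2*i" by (metis evenE)
  then show ?thesis using Lay_odd[of i] assms True by (simp add: nf_def)
next
  case False
  then obtain i where i: "k = 2*i+1" by (metis oddE)
  then have "k + 1 = 2*i+2" by simp
  then show ?thesis using Lay_even[of i] assms False i by (simp add: nf_def add.commute)
qed

lemma nf_notin: assumes "0 \<le> k" shows "nf k \<notin> Pk k"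
proof (cases "even k")
  case True
  then obtain i where i: "k = 2*i" by (metis evenE)
  then show ?thesis using dn_notin_Pk[of i] True by (simp add: nf_def)
next
  case False
  then obtain i where i: "k = 2*i+1" by (metis oddE)
  then show ?thesis using upf_notin_Pk[of i] False by (simp add: nf_def)
qed

lemma valid_nf[simp]: "valid (nf k)" by (simp add: nf_def)

lemma nf_adj: assumes "1 \<le> k" shows "madj (nf (k-1)) (nf k)"
proof (cases "even k")
  case True
  then obtain i where i: "k = 2*i" by (metis evenE)
  then have "nf (k-1) = upf (i-1)" "nf k = dn i" using True by (auto simp: nf_def; presburger)+
  then show ?thesis by (simp add: madj_def nbrs_upf)
next
  case False
  then obtain i where i: "k = 2*i+1" by (metis oddE)
  then have "nf (k-1) = dn i" "nf k = upf i" using False by (auto simp: nf_def)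
  then show ?thesis by (simp add: madj_def nbrs_dn)
qed

lemma nf_nbr: assumes "0 \<le> k" "k \<le> 2*Kh" shows "\<exists>g\<in>Pk k. madj g (nf k)"
proof (cases "even k")
  case True
  then obtain i where i: "k = 2*i" by (metis evenE)
  have "(x0+1, s0 - x0 - 1 + i, s0 + i) \<in> Pk k" using o_in_B'[of i] assms i by (simp add: Pk_def)
  moreover have "madj (nf k) (x0+1, s0 - x0 - 1 + i, s0 + i)" using True i by (simp add: nf_def madj_def nbrs_dn)
  ultimately show ?thesis using madj_sym by blast
next
  case False
  then obtain i where i: "k = 2*i+1" by (metis oddE)
  have "dn i \<in> Pk k" using i assms by (simp add: Pk_def mem_Lay_dn)
  moreover have "madj (dn i) (nf k)" using False i by (simp add: nf_def madj_def nbrs_dn)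
  ultimately show ?thesis by blast
qed

lemma Lay0: "Lay 0 = {}" by (auto simp: Lay_def)

lemma card_Pk: "card (Pk (int k)) = card B' + k"
proof (induction k)
  case 0 then show ?case by (simp add: Pk0)
next
  case (Suc k)
  have "Pk (int (Suc k)) = insert (nf (int k)) (Pk (int k))" using Pk_suc[of "int k"] by (simp add: add.commute)
  then show ?case using Suc nf_notin[of "int k"] finite_Pk by simp
qed

lemma card_Lay: "card (Lay (int k)) = k"
proof (induction k)
  case 0 then show ?case by (simp add: Lay0)
next
  case (Suc k)
  have "Lay (int (Suc k)) = insert (nf (int k)) (Lay (int k))" using Lay_suc[of "int k"] by (simp add: add.commute)
  moreover have "nf (int k) \<notin> Lay (int k)" using nf_notin[of "int k"] by (simp add: Pk_def)
  ultimately show ?case using Suc finite_Lay by simp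
qed

lemma mconn_Lay: "mconn (Lay (int k))"
proof (induction k)
  case 0 then show ?case by (simp add: Lay0 mconn_empty)
next
  case (Suc k)
  have E: "Lay (int (Suc k)) = insert (nf (int k)) (Lay (int k))" using Lay_suc[of "int k"] by (simp add: add.commute)
  show ?case
  proof (cases k)
    case 0
    then show ?thesis using E Lay0 mconn_single by simp
  next
    case (Suc k')
    have "nf (int k - 1) \<in> Lay (int k)" using Lay_suc[of "int k - 1"] Suc by (simp add: add.commute)
    moreover have "madj (nf (int k - 1)) (nf (int k))" using nf_adj[of "int k"] Suc by simp
    ultimately show ?thesis unfolding E by (rule mconn_insert[OF Suc.IH])
  qed
qed

lemma mconn_Pk: assumes "mconn B'" "int k \<le> 2*Kh + 1" shows "mconn (Pk (int k))"
  using assms(2)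
proof (induction k)
  case 0 then show ?case using assms(1) by (simp add: Pk0)
next
  case (Suc k)
  have E: "Pk (int (Suc k)) = insert (nf (int k)) (Pk (int k))" using Pk_suc[of "int k"] by (simp add: add.commute)
  obtain g where g: "g \<in> Pk (int k)" "madj g (nf (int k))" using nf_nbr[of "int k"] Suc.prems by auto
  have IH: "mconn (Pk (int k))" using Suc.IH Suc.prems by simp
  show ?case unfolding E by (rule mconn_insert[OF IH g])
qed

lemma B_eq: "B = Pk (2*Kh+1)"
proof
  show "B \<subseteq> Pk (2*Kh+1)"
  proof
    fix f assume f: "f \<in> B"
    obtain X Y S where fx: "f = (X,Y,S)" by (cases f)
    show "f \<in> Pk (2*Kh+1)"
    proof (cases "X = x0")
      case False then show ?thesis using f fx by (auto simp: B_def B'_def Pk_def boxI_def cX_def)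
    next
      case True
      have h: "valid f" "y0 \<le> Y" "Y < y1" "s0 \<le> S" "S < s1" using f fx by (auto simp: B_def boxI_def cY_def cS_def)
      show ?thesis
      proof (cases "S = x0 + Y")
        case True
        then have "f = upf (S - s0)" using fx \<open>X = x0\<close> by (simp add: upf_def)
        moreover have "upf (S - s0) \<in> Lay (2*Kh+1)" using h True unfolding mem_Lay_upf Kh_def by simp
        ultimately show ?thesis by (simp add: Pk_def)
      next
        case False
        then have S: "S = x0 + Y + 1" using h(1) fx \<open>X = x0\<close> by (simp add: valid_def)
        then have "f = dn (S - s0)" using fx \<open>X = x0\<close> by (simp add: dn_def)
        moreover have "dn (S - s0) \<in> Lay (2*Kh+1)" using h S unfolding mem_Lay_dn Kh_def by simp
        ultimately show ?thesis by (simp add: Pk_def)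
      qed
    qed
  qed
  show "Pk (2*Kh+1) \<subseteq> B"
  proof
    fix f assume "f \<in> Pk (2*Kh+1)"
    then have "f \<in> B' \<or> f \<in> Lay (2*Kh+1)" by (simp add: Pk_def)
    then show "f \<in> B"
    proof
      assume "f \<in> B'" then show ?thesis using c1 by (auto simp: B_def B'_def boxI_def)
    next
      assume "f \<in> Lay (2*Kh+1)"
      then show ?thesis using c1 c2 c3 c4
        by (auto simp: Lay_def B_def boxI_def dn_def upf_def Kh_def valid_def cX_def cY_def cS_def)
    qed
  qed
qed

lemma perim_Pk: assumes "0 \<le> k" "k \<le> 2*Kh+1"
  shows "int (perim (Pk k)) = int (perim B') + (if k = 0 then 0 else if odd k then 1 else 2)"
proof (cases "k = 0")
  case True then show ?thesis by (simp add: Pk0)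
next
  case False
  show ?thesis
  proof (cases "odd k")
    case True
    then obtain i where i: "k = 2*i+1" by (metis oddE)
    have "0 \<le> i" using i assms by simp
    then show ?thesis using perim_steps[of "nat i"] i assms True False by simp
  next
    case ev: False
    then obtain j where j: "k = 2*j" by (metis evenE)
    define i where "i = j - 1"
    have i: "k = 2*i+2" using j False unfolding i_def by simp
    have "0 \<le> i" using i assms False by simp
    then show ?thesis using perim_steps[of "nat i"] i assms ev False by simp
  qed
qed

end

definition good :: "(tri \<Rightarrow> tri) \<Rightarrow> bool" where
  "good \<psi> \<longleftrightarrow> (\<exists>\<phi>. \<forall>f. \<psi> (\<phi> f) = f \<and> \<phi> (\<psi> f) = f) \<and> (\<forall>f. valid (\<psi> f) = valid f)
     \<and> (\<forall>f g. madj (\<psi> f) (\<psi> g) = madj f g)"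

lemma goodI: assumes "\<And>f. \<psi> (\<phi> f) = f" "\<And>f. \<phi> (\<psi> f) = f" "\<And>f. valid (\<psi> f) = valid f"
   "\<And>f g. madj (\<psi> f) (\<psi> g) = madj f g" shows "good \<psi>"
  using assms unfolding good_def by blast

lemma good_inj: "good \<psi> \<Longrightarrow> inj \<psi>"
  unfolding good_def by (metis injI)

lemma good_inv: assumes "good \<psi>" shows "\<exists>\<phi>. good \<phi> \<and> (\<forall>f. \<psi> (\<phi> f) = f \<and> \<phi> (\<psi> f) = f)"
proof -
  obtain \<phi> where p: "\<forall>f. \<psi> (\<phi> f) = f \<and> \<phi> (\<psi> f) = f" using assms unfolding good_def by blast
  have "good \<phi>"
  proof (rule goodI[of \<phi> \<psi>])
    show "\<phi> (\<psi> f) = f" "\<psi> (\<phi> f) = f" for f using p by blast+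
    show "valid (\<phi> f) = valid f" for f using assms p unfolding good_def by metis
    show "madj (\<phi> f) (\<phi> g) = madj f g" for f g using assms p unfolding good_def by metis
  qed
  then show ?thesis using p by blast
qed

lemma good_perim: assumes "good \<psi>" shows "perim (\<psi> ` M) = perim M"
proof -
  have inj: "inj \<psi>" using good_inj[OF assms] .
  have v: "\<And>f g. madj (\<psi> f) (\<psi> g) = madj f g" using assms unfolding good_def by blast
  obtain \<phi> where p: "\<forall>f. \<psi> (\<phi> f) = f \<and> \<phi> (\<psi> f) = f" using assms unfolding good_def by blast
  let ?h = "\<lambda>(a,b). (\<psi> a, \<psi> b)"
  have "bp (\<psi> ` M) = ?h ` bp M"
  proof (rule set_eqI)
    fix q :: "tri \<times> tri"
    obtain a b where q: "q = (a,b)" by (cases q)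
    have "q \<in> ?h ` bp M \<longleftrightarrow> (\<phi> a, \<phi> b) \<in> bp M"
    proof
      assume "q \<in> ?h ` bp M"
      then obtain c d where "(c,d) \<in> bp M" "q = (\<psi> c, \<psi> d)" by auto
      moreover have "\<phi> (\<psi> c) = c" "\<phi> (\<psi> d) = d" using p by blast+
      ultimately show "(\<phi> a, \<phi> b) \<in> bp M" using q by simp
    next
      assume "(\<phi> a, \<phi> b) \<in> bp M"
      moreover have "\<psi> (\<phi> a) = a" "\<psi> (\<phi> b) = b" using p by blast+
      then have "q = ?h (\<phi> a, \<phi> b)" using q by simp
      ultimately show "q \<in> ?h ` bp M" by blast
    qed
    also have "\<dots> \<longleftrightarrow> q \<in> bp (\<psi> ` M)"
    proof -
      have "a \<in> \<psi> ` M \<longleftrightarrow> \<phi> a \<in> M" using p by (metis image_iff)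
      moreover have "b \<in> \<psi> ` M \<longleftrightarrow> \<phi> b \<in> M" using p by (metis image_iff)
      moreover have "madj a b \<longleftrightarrow> madj (\<phi> a) (\<phi> b)" using v p by metis
      ultimately show ?thesis using q by (simp add: bp_def)
    qed
    finally show "q \<in> bp (\<psi> ` M) \<longleftrightarrow> q \<in> ?h ` bp M" by blast
  qed
  moreover have "inj_on ?h (bp M)" using inj by (auto simp: inj_on_def inj_def)
  ultimately show ?thesis unfolding perim_def by (simp add: card_image)
qed

lemma good_card: "good \<psi> \<Longrightarrow> card (\<psi> ` M) = card M"
  using good_inj by (metis card_image inj_on_subset subset_UNIV)

lemma good_valid: "good \<psi> \<Longrightarrow> M \<subseteq> {f. valid f} \<Longrightarrow> \<psi> ` M \<subseteq> {f. valid f}"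
  unfolding good_def by auto

lemma good_mconn: assumes "good \<psi>" "mconn M" shows "mconn (\<psi> ` M)"
proof -
  have v: "\<And>f g. madj (\<psi> f) (\<psi> g) = madj f g" using assms unfolding good_def by blast
  have inj: "inj \<psi>" using good_inj[OF assms(1)] .
  let ?R = "\<lambda>a b. a \<in> M \<and> b \<in> M \<and> madj a b"
  let ?R' = "\<lambda>a b. a \<in> \<psi> ` M \<and> b \<in> \<psi> ` M \<and> madj a b"
  have "?R'\<^sup>*\<^sup>* (\<psi> a) (\<psi> b)" if "?R\<^sup>*\<^sup>* a b" for a b
    using that
  proof (induction rule: rtranclp_induct)
    case base then show ?case by simp
  next
    case (step y z)
    have "?R' (\<psi> y) (\<psi> z)" using step(2) v by auto
    then show ?case by (rule rtranclp.rtrancl_into_rtrancl[OF step(3)])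
  qed
  then show ?thesis using assms(2) unfolding mconn_def by blast
qed

lemma good_mconn_iff: assumes "good \<psi>" shows "mconn (\<psi> ` M) \<longleftrightarrow> mconn M"
proof
  assume "mconn (\<psi> ` M)"
  obtain \<phi> where p: "good \<phi>" "\<forall>f. \<psi> (\<phi> f) = f \<and> \<phi> (\<psi> f) = f" using good_inv[OF assms] by blast
  have pp: "\<phi> (\<psi> f) = f" for f using p(2) by blast
  have "\<phi> ` (\<psi> ` M) = M" using pp by (simp add: image_comp comp_def)
  then show "mconn M" using good_mconn[OF p(1) \<open>mconn (\<psi> ` M)\<close>] by simp
qed (rule good_mconn[OF assms])

lemma image_inv: assumes "\<And>f. \<psi> (\<phi> f) = f" "\<And>f. \<phi> (\<psi> f) = f"
  shows "\<psi> ` A = {g. \<phi> g \<in> A}"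
  using assms by (auto, metis image_eqI)

definition mtr :: "int \<Rightarrow> int \<Rightarrow> tri \<Rightarrow> tri" where
  "mtr a b f = (case f of (X,Y,S) \<Rightarrow> (X+a, Y+b, S+a+b))"

lemma good_mtr: "good (mtr a b)"
proof (rule goodI[of _ "mtr (-a) (-b)"])
  show "mtr a b (mtr (- a) (- b) f) = f" "mtr (-a) (-b) (mtr a b f) = f" for f
    by (cases f, simp add: mtr_def)+
  show "valid (mtr a b f) = valid f" for f by (cases f) (auto simp: mtr_def valid_def)
  show "madj (mtr a b f) (mtr a b g) = madj f g" for f g
    by (cases f; cases g) (auto simp: mtr_def madj_def valid_def nbrs_def split: if_splits)
qed

lemma tri_hex_eq: "tri_hex d a b c = mk ` boxI 0 (int d - int b) 0 (int d - int c) (int a) (int d)"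
proof -
  let ?Q = "\<lambda>F. (\<forall>(x, y)\<in>F. 0 \<le> x \<and> 0 \<le> y \<and> x + y \<le> int d)
        \<and> \<not> (\<forall>(x, y)\<in>F. x + y \<le> int a)
        \<and> \<not> (\<forall>(x, y)\<in>F. x \<ge> int d - int b)
        \<and> \<not> (\<forall>(x, y)\<in>F. y \<ge> int d - int c)"
  have "tri_hex d a b c = {F \<in> faces. ?Q F}" by (simp add: tri_hex_def)
  also have "\<dots> = mk ` {f. valid f \<and> ?Q (mk f)}" unfolding faces_eq by auto
  also have "{f. valid f \<and> ?Q (mk f)} = boxI 0 (int d - int b) 0 (int d - int c) (int a) (int d)"
  proof (rule set_eqI)
    fix f :: tri
    obtain X Y S where f: "f = (X,Y,S)" by (cases f)
    show "f \<in> {f. valid f \<and> ?Q (mk f)} \<longleftrightarrow> f \<in> boxI 0 (int d - int b) 0 (int d - int c) (int a) (int d)"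
    proof (cases "S = X + Y")
      case True
      then show ?thesis unfolding f using mk_up[OF True]
        by (auto simp: boxI_def valid_def cX_def cY_def cS_def)
    next
      case False
      show ?thesis
      proof (cases "S = X + Y + 1")
        case True
        then show ?thesis unfolding f using mk_down[OF True]
          by (auto simp: boxI_def valid_def cX_def cY_def cS_def)
      next
        case False
        then show ?thesis using \<open>S \<noteq> X + Y\<close> unfolding f by (auto simp: boxI_def valid_def)
      qed
    qed
  qed
  finally show ?thesis .
qed

definition Qbox :: "int \<Rightarrow> nat \<Rightarrow> tri set" where
  "Qbox r i = (if i = 0 then boxI 0 (2*r) 0 (2*r) r (3*r)
      else if i = 1 then boxI 0 (2*r) 0 (2*r) (r-1) (3*r)
      else if i = 2 then boxI 0 (2*r+1) 0 (2*r) r (3*r+1)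
      else if i = 3 then boxI 0 (2*r+1) 0 (2*r+1) r (3*r+1)
      else if i = 4 then boxI 0 (2*r+1) 0 (2*r+1) r (3*r+2)
      else boxI 0 (2*r+2) 0 (2*r+1) r (3*r+2))"

definition Qm :: "nat \<Rightarrow> tri set" where
  "Qm n = Qbox (int (n div 6) + 1) (n mod 6)"

lemma qhex_eq: "r \<ge> 1 \<Longrightarrow> qhex r i = mk ` Qbox (int r) i"
  by (auto simp: qhex_def Qbox_def tri_hex_eq of_nat_diff algebra_simps)

lemma qh_seq_eq: "qh_seq n = mk ` Qm n"
  unfolding qh_seq_def Qm_def using qhex_eq[of "n div 6 + 1" "n mod 6"] by (simp add: add.commute)

lemma mtr_boxI: "mtr a b ` boxI x0 x1 y0 y1 s0 s1 = boxI (x0+a) (x1+a) (y0+b) (y1+b) (s0+a+b) (s1+a+b)"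
proof -
  have "mtr a b ` boxI x0 x1 y0 y1 s0 s1 = {g. mtr (-a) (-b) g \<in> boxI x0 x1 y0 y1 s0 s1}"
    by (rule image_inv) (simp_all add: mtr_def split: prod.splits)
  also have "\<dots> = boxI (x0+a) (x1+a) (y0+b) (y1+b) (s0+a+b) (s1+a+b)"
    by (auto simp: mtr_def boxI_def valid_def cX_def cY_def cS_def split: prod.splits)
  finally show ?thesis .
qed

definition psi01 :: "tri \<Rightarrow> tri" where "psi01 f = (case f of (X,Y,S) \<Rightarrow> (S, -Y-1, X))"

lemma good_psi01: "good psi01"
proof (rule goodI[of _ psi01])
  show "psi01 (psi01 f) = f" for f by (cases f) (simp add: psi01_def)
  then show "psi01 (psi01 f) = f" for f .
  show "valid (psi01 f) = valid f" for f by (cases f) (auto simp: psi01_def valid_def)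
  show "madj (psi01 f) (psi01 g) = madj f g" for f g
    by (cases f; cases g) (auto simp: psi01_def madj_def valid_def nbrs_def split: if_splits)
qed

lemma trans01: assumes "1 \<le> r"
  shows "canon (r-1) (3*r) (-2*r) 0 0 (2*r) \<and> psi01 ` boxI (r-1+1) (3*r) (-2*r) 0 0 (2*r) = Qbox r 0
     \<and> psi01 ` boxI (r-1) (3*r) (-2*r) 0 0 (2*r) = mtr 0 0 ` Qbox r 1"
proof (intro conjI)
  show "canon (r-1) (3*r) (-2*r) 0 0 (2*r)" using assms by unfold_locales auto
  have ii: "psi01 (psi01 f) = f" for f by (cases f) (simp add: psi01_def)
  show "psi01 ` boxI (r-1+1) (3*r) (-2*r) 0 0 (2*r) = Qbox r 0"
    unfolding image_inv[of psi01 psi01, OF ii ii]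
    by (auto simp: Qbox_def psi01_def boxI_def valid_def cX_def cY_def cS_def split: prod.splits)
  show "psi01 ` boxI (r-1) (3*r) (-2*r) 0 0 (2*r) = mtr 0 0 ` Qbox r 1"
  proof -
    have "mtr 0 0 ` Qbox r 1 = boxI 0 (2*r) 0 (2*r) (r-1) (3*r)" by (simp add: Qbox_def mtr_boxI)
    then show ?thesis unfolding image_inv[of psi01 psi01, OF ii ii]
      by (auto simp: psi01_def boxI_def valid_def cX_def cY_def cS_def split: prod.splits)
  qed
qed


definition psi12 :: "int \<Rightarrow> tri \<Rightarrow> tri" where "psi12 r f = (case f of (X,Y,S) \<Rightarrow> (X, Y, S))"
definition phi12 :: "int \<Rightarrow> tri \<Rightarrow> tri" where "phi12 r f = (case f of (X,Y,S) \<Rightarrow> (X, Y, S))"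

lemma inv12: "psi12 r (phi12 r f) = f" "phi12 r (psi12 r f) = f"
  by (cases f, simp add: psi12_def phi12_def)+

lemma good_psi12: "good (psi12 r)"
proof (rule goodI[of _ "phi12 r"])
  show "psi12 r (phi12 r f) = f" "phi12 r (psi12 r f) = f" for f using inv12 by auto
  show "valid (psi12 r f) = valid f" for f by (cases f) (auto simp: psi12_def valid_def)
  show "madj (psi12 r f) (psi12 r g) = madj f g" for f g
    by (cases f; cases g) (auto simp: psi12_def madj_def valid_def nbrs_def split: if_splits)
qed

lemma trans12: assumes "1 \<le> r"
  shows "canon (-1) (2*r) (0) (2*r) (r-1) (3*r) \<and> psi12 r ` boxI (-1+1) (2*r) (0) (2*r) (r-1) (3*r) = Qbox r 1
     \<and> psi12 r ` boxI (-1) (2*r) (0) (2*r) (r-1) (3*r) = mtr (-1) (0) ` Qbox (r) 2"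
proof (intro conjI)
  show "canon (-1) (2*r) (0) (2*r) (r-1) (3*r)" using assms by unfold_locales auto
  show "psi12 r ` boxI (-1+1) (2*r) (0) (2*r) (r-1) (3*r) = Qbox r 1"
    unfolding image_inv[of "psi12 r" "phi12 r", OF inv12]
    by (auto simp: Qbox_def psi12_def phi12_def boxI_def valid_def cX_def cY_def cS_def split: prod.splits)
  show "psi12 r ` boxI (-1) (2*r) (0) (2*r) (r-1) (3*r) = mtr (-1) (0) ` Qbox (r) 2"
  proof -
    have "mtr (-1) (0) ` Qbox (r) 2 = boxI (-1) (2*r) (0) (2*r) (r-1) (3*r)" by (simp add: Qbox_def mtr_boxI algebra_simps)
    then show ?thesis unfolding image_inv[of "psi12 r" "phi12 r", OF inv12]
      by (auto simp: psi12_def phi12_def boxI_def valid_def cX_def cY_def cS_def split: prod.splits)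
  qed
qed

definition psi23 :: "int \<Rightarrow> tri \<Rightarrow> tri" where "psi23 r f = (case f of (X,Y,S) \<Rightarrow> (S, 2*r - X, Y + 2*r + 1))"
definition phi23 :: "int \<Rightarrow> tri \<Rightarrow> tri" where "phi23 r f = (case f of (X,Y,S) \<Rightarrow> (2*r - Y, S - 2*r - 1, X))"

lemma inv23: "psi23 r (phi23 r f) = f" "phi23 r (psi23 r f) = f"
  by (cases f, simp add: psi23_def phi23_def)+

lemma good_psi23: "good (psi23 r)"
proof (rule goodI[of _ "phi23 r"])
  show "psi23 r (phi23 r f) = f" "phi23 r (psi23 r f) = f" for f using inv23 by auto
  show "valid (psi23 r f) = valid f" for f by (cases f) (auto simp: psi23_def valid_def)
  show "madj (psi23 r f) (psi23 r g) = madj f g" for f g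
    by (cases f; cases g) (auto simp: psi23_def madj_def valid_def nbrs_def split: if_splits)
qed

lemma trans23: assumes "1 \<le> r"
  shows "canon (0) (2*r+1) (-r-1) (r) (0) (2*r+1) \<and> psi23 r ` boxI (0+1) (2*r+1) (-r-1) (r) (0) (2*r+1) = Qbox r 2
     \<and> psi23 r ` boxI (0) (2*r+1) (-r-1) (r) (0) (2*r+1) = mtr (0) (0) ` Qbox (r) 3"
proof (intro conjI)
  show "canon (0) (2*r+1) (-r-1) (r) (0) (2*r+1)" using assms by unfold_locales auto
  show "psi23 r ` boxI (0+1) (2*r+1) (-r-1) (r) (0) (2*r+1) = Qbox r 2"
    unfolding image_inv[of "psi23 r" "phi23 r", OF inv23]
    by (auto simp: Qbox_def psi23_def phi23_def boxI_def valid_def cX_def cY_def cS_def split: prod.splits)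
  show "psi23 r ` boxI (0) (2*r+1) (-r-1) (r) (0) (2*r+1) = mtr (0) (0) ` Qbox (r) 3"
  proof -
    have "mtr (0) (0) ` Qbox (r) 3 = boxI (0) (2*r+1) (0) (2*r+1) (r) (3*r+1)" by (simp add: Qbox_def mtr_boxI algebra_simps)
    then show ?thesis unfolding image_inv[of "psi23 r" "phi23 r", OF inv23]
      by (auto simp: psi23_def phi23_def boxI_def valid_def cX_def cY_def cS_def split: prod.splits)
  qed
qed

definition psi34 :: "int \<Rightarrow> tri \<Rightarrow> tri" where "psi34 r f = (case f of (X,Y,S) \<Rightarrow> (3*r+1-S, Y, 3*r+1-X))"
definition phi34 :: "int \<Rightarrow> tri \<Rightarrow> tri" where "phi34 r f = (case f of (X,Y,S) \<Rightarrow> (3*r+1-S, Y, 3*r+1-X))"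

lemma inv34: "psi34 r (phi34 r f) = f" "phi34 r (psi34 r f) = f"
  by (cases f, simp add: psi34_def phi34_def)+

lemma good_psi34: "good (psi34 r)"
proof (rule goodI[of _ "phi34 r"])
  show "psi34 r (phi34 r f) = f" "phi34 r (psi34 r f) = f" for f using inv34 by auto
  show "valid (psi34 r f) = valid f" for f by (cases f) (auto simp: psi34_def valid_def)
  show "madj (psi34 r f) (psi34 r g) = madj f g" for f g
    by (cases f; cases g) (auto simp: psi34_def madj_def valid_def nbrs_def split: if_splits)
qed

lemma trans34: assumes "1 \<le> r"
  shows "canon (0) (2*r+2) (0) (2*r+1) (r+1) (3*r+2) \<and> psi34 r ` boxI (0+1) (2*r+2) (0) (2*r+1) (r+1) (3*r+2) = Qbox r 3
     \<and> psi34 r ` boxI (0) (2*r+2) (0) (2*r+1) (r+1) (3*r+2) = mtr (0) (0) ` Qbox (r) 4"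
proof (intro conjI)
  show "canon (0) (2*r+2) (0) (2*r+1) (r+1) (3*r+2)" using assms by unfold_locales auto
  show "psi34 r ` boxI (0+1) (2*r+2) (0) (2*r+1) (r+1) (3*r+2) = Qbox r 3"
    unfolding image_inv[of "psi34 r" "phi34 r", OF inv34]
    by (auto simp: Qbox_def psi34_def phi34_def boxI_def valid_def cX_def cY_def cS_def split: prod.splits)
  show "psi34 r ` boxI (0) (2*r+2) (0) (2*r+1) (r+1) (3*r+2) = mtr (0) (0) ` Qbox (r) 4"
  proof -
    have "mtr (0) (0) ` Qbox (r) 4 = boxI (0) (2*r+1) (0) (2*r+1) (r) (3*r+2)" by (simp add: Qbox_def mtr_boxI algebra_simps)
    then show ?thesis unfolding image_inv[of "psi34 r" "phi34 r", OF inv34]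
      by (auto simp: psi34_def phi34_def boxI_def valid_def cX_def cY_def cS_def split: prod.splits)
  qed
qed

definition psi45 :: "int \<Rightarrow> tri \<Rightarrow> tri" where "psi45 r f = (case f of (X,Y,S) \<Rightarrow> (2*r+1-X, -Y, 2*r+2-S))"
definition phi45 :: "int \<Rightarrow> tri \<Rightarrow> tri" where "phi45 r f = (case f of (X,Y,S) \<Rightarrow> (2*r+1-X, -Y, 2*r+2-S))"

lemma inv45: "psi45 r (phi45 r f) = f" "phi45 r (psi45 r f) = f"
  by (cases f, simp add: psi45_def phi45_def)+

lemma good_psi45: "good (psi45 r)"
proof (rule goodI[of _ "phi45 r"])
  show "psi45 r (phi45 r f) = f" "phi45 r (psi45 r f) = f" for f using inv45 by auto
  show "valid (psi45 r f) = valid f" for f by (cases f) (auto simp: psi45_def valid_def)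
  show "madj (psi45 r f) (psi45 r g) = madj f g" for f g
    by (cases f; cases g) (auto simp: psi45_def madj_def valid_def nbrs_def split: if_splits)
qed

lemma trans45: assumes "1 \<le> r"
  shows "canon (0) (2*r+2) (-2*r) (1) (1-r) (r+3) \<and> psi45 r ` boxI (0+1) (2*r+2) (-2*r) (1) (1-r) (r+3) = Qbox r 4
     \<and> psi45 r ` boxI (0) (2*r+2) (-2*r) (1) (1-r) (r+3) = mtr (0) (0) ` Qbox (r) 5"
proof (intro conjI)
  show "canon (0) (2*r+2) (-2*r) (1) (1-r) (r+3)" using assms by unfold_locales auto
  show "psi45 r ` boxI (0+1) (2*r+2) (-2*r) (1) (1-r) (r+3) = Qbox r 4"
    unfolding image_inv[of "psi45 r" "phi45 r", OF inv45]
    by (auto simp: Qbox_def psi45_def phi45_def boxI_def valid_def cX_def cY_def cS_def split: prod.splits)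
  show "psi45 r ` boxI (0) (2*r+2) (-2*r) (1) (1-r) (r+3) = mtr (0) (0) ` Qbox (r) 5"
  proof -
    have "mtr (0) (0) ` Qbox (r) 5 = boxI (0) (2*r+2) (0) (2*r+1) (r) (3*r+2)" by (simp add: Qbox_def mtr_boxI algebra_simps)
    then show ?thesis unfolding image_inv[of "psi45 r" "phi45 r", OF inv45]
      by (auto simp: psi45_def phi45_def boxI_def valid_def cX_def cY_def cS_def split: prod.splits)
  qed
qed

definition psi50 :: "int \<Rightarrow> tri \<Rightarrow> tri" where "psi50 r f = (case f of (X,Y,S) \<Rightarrow> (Y, X-1, S-1))"
definition phi50 :: "int \<Rightarrow> tri \<Rightarrow> tri" where "phi50 r f = (case f of (X,Y,S) \<Rightarrow> (Y+1, X, S+1))"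

lemma inv50: "psi50 r (phi50 r f) = f" "phi50 r (psi50 r f) = f"
  by (cases f, simp add: psi50_def phi50_def)+

lemma good_psi50: "good (psi50 r)"
proof (rule goodI[of _ "phi50 r"])
  show "psi50 r (phi50 r f) = f" "phi50 r (psi50 r f) = f" for f using inv50 by auto
  show "valid (psi50 r f) = valid f" for f by (cases f) (auto simp: psi50_def valid_def)
  show "madj (psi50 r f) (psi50 r g) = madj f g" for f g
    by (cases f; cases g) (auto simp: psi50_def madj_def valid_def nbrs_def split: if_splits)
qed

lemma trans50: assumes "1 \<le> r"
  shows "canon (0) (2*r+2) (0) (2*r+2) (r+1) (3*r+3) \<and> psi50 r ` boxI (0+1) (2*r+2) (0) (2*r+2) (r+1) (3*r+3) = Qbox r 5
     \<and> psi50 r ` boxI (0) (2*r+2) (0) (2*r+2) (r+1) (3*r+3) = mtr (0) (-1) ` Qbox (r+1) 0"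
proof (intro conjI)
  show "canon (0) (2*r+2) (0) (2*r+2) (r+1) (3*r+3)" using assms by unfold_locales auto
  show "psi50 r ` boxI (0+1) (2*r+2) (0) (2*r+2) (r+1) (3*r+3) = Qbox r 5"
    unfolding image_inv[of "psi50 r" "phi50 r", OF inv50]
    by (auto simp: Qbox_def psi50_def phi50_def boxI_def valid_def cX_def cY_def cS_def split: prod.splits)
  show "psi50 r ` boxI (0) (2*r+2) (0) (2*r+2) (r+1) (3*r+3) = mtr (0) (-1) ` Qbox (r+1) 0"
  proof -
    have "mtr (0) (-1) ` Qbox (r+1) 0 = boxI (0) (2*r+2) (-1) (2*r+1) (r) (3*r+2)" by (simp add: Qbox_def mtr_boxI algebra_simps)
    then show ?thesis unfolding image_inv[of "psi50 r" "phi50 r", OF inv50]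
      by (auto simp: psi50_def phi50_def boxI_def valid_def cX_def cY_def cS_def split: prod.splits)
  qed
qed

lemma good_id: "good id"
  by (rule goodI[of _ id]) auto

lemma trans_all: "\<exists>\<psi> x0 x1 y0 y1 s0 s1 a b. canon x0 x1 y0 y1 s0 s1 \<and> good \<psi>
   \<and> \<psi> ` boxI (x0+1) x1 y0 y1 s0 s1 = Qm n \<and> \<psi> ` boxI x0 x1 y0 y1 s0 s1 = mtr a b ` Qm (Suc n)"
proof -
  define r where "r = int (n div 6) + 1"
  have r1: "1 \<le> r" unfolding r_def by simp
  have Qn: "Qm n = Qbox r (n mod 6)" unfolding Qm_def r_def by simp
  have cases: "n mod 6 = 0 \<or> n mod 6 = 1 \<or> n mod 6 = 2 \<or> n mod 6 = 3 \<or> n mod 6 = 4 \<or> n mod 6 = 5" by arith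
  have Qs: "n mod 6 < 5 \<Longrightarrow> Qm (Suc n) = Qbox r (Suc (n mod 6))"
  proof -
    assume h: "n mod 6 < 5"
    then have "Suc n div 6 = n div 6" "Suc n mod 6 = Suc (n mod 6)" by (simp_all add: mod_Suc div_Suc)
    then show ?thesis unfolding Qm_def r_def by simp
  qed
  have Qs5: "n mod 6 = 5 \<Longrightarrow> Qm (Suc n) = Qbox (r+1) 0"
  proof -
    assume h: "n mod 6 = 5"
    then have "Suc n div 6 = n div 6 + 1" "Suc n mod 6 = 0" by (simp_all add: mod_Suc div_Suc)
    then show ?thesis unfolding Qm_def r_def by simp
  qed
  from cases show ?thesis
  proof (elim disjE)
    assume h: "n mod 6 = 0"
    show ?thesis using trans01[OF r1] good_psi01 Qn Qs h by (intro exI) auto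
  next
    assume h: "n mod 6 = 1"
    show ?thesis using trans12[OF r1] good_psi12 Qn Qs h by (intro exI) (auto simp: numeral_2_eq_2)
  next
    assume h: "n mod 6 = 2"
    show ?thesis using trans23[OF r1] good_psi23 Qn Qs h by (intro exI) (auto simp: numeral_3_eq_3)
  next
    assume h: "n mod 6 = 3"
    have "Suc 3 = (4::nat)" by simp
    then show ?thesis using trans34[OF r1] good_psi34 Qn Qs h by (intro exI) auto
  next
    assume h: "n mod 6 = 4"
    have "Suc 4 = (5::nat)" by simp
    then show ?thesis using trans45[OF r1] good_psi45 Qn Qs h by (intro exI) auto
  next
    assume h: "n mod 6 = 5"
    show ?thesis using trans50[OF r1] good_psi50 Qn Qs5 h by (intro exI) auto
  qed
qed


lemma Qm0: "Qm 0 = {(0,1,1),(0,0,1),(1,0,1),(1,0,2),(1,1,2),(0,1,2)}"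
proof (rule set_eqI)
  fix f :: tri
  obtain X Y S where f: "f = (X,Y,S)" by (cases f)
  have Q: "Qm 0 = boxI 0 2 0 2 1 3" by (simp add: Qm_def Qbox_def)
  show "f \<in> Qm 0 \<longleftrightarrow> f \<in> {(0,1,1),(0,0,1),(1,0,1),(1,0,2),(1,1,2),(0,1,2)}"
  proof
    assume "f \<in> Qm 0"
    then have h: "0 \<le> X" "X < 2" "0 \<le> Y" "Y < 2" "S = X + Y \<or> S = X + Y + 1" "1 \<le> S" "S < 3"
      unfolding Q f by (auto simp: boxI_def valid_def cX_def cY_def cS_def)
    then have "X = 0 \<or> X = 1" "Y = 0 \<or> Y = 1" by arith+
    then show "f \<in> {(0,1,1),(0,0,1),(1,0,1),(1,0,2),(1,1,2),(0,1,2)}" using h(5,6,7) unfolding f by auto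
  next
    assume "f \<in> {(0,1,1),(0,0,1),(1,0,1),(1,0,2),(1,1,2),(0,1,2)}"
    then show "f \<in> Qm 0" unfolding Q by (auto simp: boxI_def valid_def cX_def cY_def cS_def)
  qed
qed

lemma base_inv: "int (perim (Qm 0)) = 6 \<and> mconn (Qm 0)"
proof -
  define M1 where "M1 = {(0::int,1::int,1::int)}"
  define M2 where "M2 = insert (0,0,1) M1"
  define M3 where "M3 = insert (1,0,1) M2"
  define M4 where "M4 = insert (1,0,2) M3"
  define M5 where "M5 = insert (1,1,2) M4"
  define M6 where "M6 = insert (0,1,2) M5"
  have q: "Qm 0 = M6" unfolding Qm0 M6_def M5_def M4_def M3_def M2_def M1_def by auto
  have p1: "int (perim M1) = 3" using perim_insert[of "{}" "(0,1,1)"] unfolding M1_def by (simp add: valid_def)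
  have p2: "int (perim M2) = 4" using perim_insert[of M1 "(0,0,1)"] p1 unfolding M2_def
    by (simp add: valid_def nbrs_def M1_def)
  have p3: "int (perim M3) = 5" using perim_insert[of M2 "(1,0,1)"] p2 unfolding M3_def
    by (simp add: valid_def nbrs_def M1_def M2_def)
  have p4: "int (perim M4) = 6" using perim_insert[of M3 "(1,0,2)"] p3 unfolding M4_def
    by (simp add: valid_def nbrs_def M1_def M2_def M3_def)
  have p5: "int (perim M5) = 7" using perim_insert[of M4 "(1,1,2)"] p4 unfolding M5_def
    by (simp add: valid_def nbrs_def M1_def M2_def M3_def M4_def)
  have c6: "nbrs (0,1,2) \<inter> M5 = {(0,1,1),(1,1,2)}"
    by (auto simp: nbrs_def M1_def M2_def M3_def M4_def M5_def)
  have p6: "int (perim M6) = 6" using perim_insert[of M5 "(0,1,2)"] p5 c6 unfolding M6_def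
    by (simp add: valid_def M1_def M2_def M3_def M4_def M5_def)
  have m1: "mconn M1" unfolding M1_def by (rule mconn_single)
  have m2: "mconn M2" unfolding M2_def by (rule mconn_insert[OF m1, of "(0,1,1)"]) (auto simp: M1_def madj_def nbrs_def valid_def)
  have m3: "mconn M3" unfolding M3_def by (rule mconn_insert[OF m2, of "(0,0,1)"]) (auto simp: M2_def madj_def nbrs_def valid_def)
  have m4: "mconn M4" unfolding M4_def by (rule mconn_insert[OF m3, of "(1,0,1)"]) (auto simp: M3_def madj_def nbrs_def valid_def)
  have m5: "mconn M5" unfolding M5_def by (rule mconn_insert[OF m4, of "(1,0,2)"]) (auto simp: M4_def madj_def nbrs_def valid_def)
  have m6: "mconn M6" unfolding M6_def by (rule mconn_insert[OF m5, of "(1,1,2)"]) (auto simp: M5_def madj_def nbrs_def valid_def)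
  show ?thesis using q p6 m6 by simp
qed

lemma inv: "int (perim (Qm n)) = int n + 6 \<and> mconn (Qm n)"
proof (induction n)
  case 0 then show ?case using base_inv by simp
next
  case (Suc n)
  obtain \<psi> x0 x1 y0 y1 s0 s1 a b where H: "canon x0 x1 y0 y1 s0 s1 \<and> good \<psi>
   \<and> \<psi> ` boxI (x0+1) x1 y0 y1 s0 s1 = Qm n \<and> \<psi> ` boxI x0 x1 y0 y1 s0 s1 = mtr a b ` Qm (Suc n)"
    using trans_all[of n] by (elim exE) (rule that)
  have C: "canon x0 x1 y0 y1 s0 s1" and g: "good \<psi>"
    and e1: "\<psi> ` boxI (x0+1) x1 y0 y1 s0 s1 = Qm n"
    and e2: "\<psi> ` boxI x0 x1 y0 y1 s0 s1 = mtr a b ` Qm (Suc n)" using H by auto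
  interpret C: canon x0 x1 y0 y1 s0 s1 by (rule C)
  have e1': "\<psi> ` C.B' = Qm n" using e1 by (simp add: C.B'_def)
  have e2': "\<psi> ` C.Pk (2*C.Kh+1) = mtr a b ` Qm (Suc n)" using e2 C.B_eq by (simp add: C.B_def)
  have "perim (Qm (Suc n)) = perim (mtr a b ` Qm (Suc n))" using good_perim[OF good_mtr] by simp
  also have "\<dots> = perim (C.Pk (2*C.Kh+1))" using e2' good_perim[OF g] by metis
  finally have pe: "int (perim (Qm (Suc n))) = int (perim C.B') + 1"
    using C.perim_Pk[of "2*C.Kh+1"] C.Kh_nn by simp
  have "perim C.B' = perim (Qm n)" using e1' good_perim[OF g] by metis
  then have P: "int (perim (Qm (Suc n))) = int (Suc n) + 6" using pe Suc.IH by simp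
  have "mconn C.B'" using Suc.IH e1' good_mconn_iff[OF g] by metis
  then have "mconn (C.Pk (int (nat (2*C.Kh+1))))" using C.mconn_Pk[of "nat (2*C.Kh+1)"] C.Kh_nn by simp
  then have "mconn (C.Pk (2*C.Kh+1))" using C.Kh_nn by simp
  then have "mconn (mtr a b ` Qm (Suc n))" using e2' good_mconn_iff[OF g] by metis
  then have "mconn (Qm (Suc n))" using good_mconn_iff[OF good_mtr] by metis
  then show ?case using P by simp
qed

lemma boxI0: "boxI 0 n 0 m a d = boxN n m a d"
  by (simp add: boxI_def boxN_def)

lemma area_facts: "(int n + 5)^2 < 6 * int (card (Qm n)) \<and> (int n + 6)^2 < 6 * int (card (Qm n)) + 12"
proof -
  define r where "r = int (n div 6) + 1"
  have r1: "1 \<le> r" unfolding r_def by simp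
  have e0: "6 * (n div 6) + n mod 6 = n" by simp
  have nn: "int n = 6*(r-1) + int (n mod 6)"
  proof -
    have "int n = int (6 * (n div 6) + n mod 6)" using e0 by simp
    also have "\<dots> = 6 * int (n div 6) + int (n mod 6)" by (simp only: of_nat_add of_nat_mult of_nat_numeral)
    finally show ?thesis unfolding r_def by simp
  qed
  have Qn: "Qm n = Qbox r (n mod 6)" unfolding Qm_def r_def by simp
  have cases: "n mod 6 = 0 \<or> n mod 6 = 1 \<or> n mod 6 = 2 \<or> n mod 6 = 3 \<or> n mod 6 = 4 \<or> n mod 6 = 5" by arith
  from cases show ?thesis
  proof (elim disjE)
    assume h: "n mod 6 = 0"
    have "int (card (Qm n)) = 2*(2*r)*(2*r) - r*r - (2*r+2*r-3*r)*(2*r+2*r-3*r)"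
      unfolding Qn h using boxN_card[of r "2*r" "2*r" "3*r"] r1 by (simp add: Qbox_def boxI0)
    then have c: "int (card (Qm n)) = 6*r*r" by (simp add: algebra_simps)
    have N: "int n = 6*r - 6 + 0" using nn h by simp
    show ?thesis unfolding c N using r1 by (simp add: power2_eq_square algebra_simps)
  next
    assume h: "n mod 6 = 1"
    have "int (card (Qm n)) = 2*(2*r)*(2*r) - (r-1)*(r-1) - (2*r+2*r-3*r)*(2*r+2*r-3*r)"
      unfolding Qn h using boxN_card[of "r-1" "2*r" "2*r" "3*r"] r1 by (simp add: Qbox_def boxI0)
    then have c: "int (card (Qm n)) = 6*r*r+2*r-1" by (simp add: algebra_simps)
    have N: "int n = 6*r - 6 + 1" using nn h by simp
    show ?thesis unfolding c N using r1 by (simp add: power2_eq_square algebra_simps)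
  next
    assume h: "n mod 6 = 2"
    have "int (card (Qm n)) = 2*(2*r+1)*(2*r) - r*r - (2*r+1+2*r-(3*r+1))*(2*r+1+2*r-(3*r+1))"
      unfolding Qn h using boxN_card[of r "2*r+1" "2*r" "3*r+1"] r1 by (simp add: Qbox_def boxI0)
    then have c: "int (card (Qm n)) = 6*r*r+4*r" by (simp add: algebra_simps)
    have N: "int n = 6*r - 6 + 2" using nn h by simp
    show ?thesis unfolding c N using r1 by (simp add: power2_eq_square algebra_simps)
  next
    assume h: "n mod 6 = 3"
    have "int (card (Qm n)) = 2*(2*r+1)*(2*r+1) - r*r - (2*r+1+(2*r+1)-(3*r+1))*(2*r+1+(2*r+1)-(3*r+1))"
      unfolding Qn h using boxN_card[of r "2*r+1" "2*r+1" "3*r+1"] r1 by (simp add: Qbox_def boxI0)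
    then have c: "int (card (Qm n)) = 6*r*r+6*r+1" by (simp add: algebra_simps)
    have N: "int n = 6*r - 6 + 3" using nn h by simp
    show ?thesis unfolding c N using r1 by (simp add: power2_eq_square algebra_simps)
  next
    assume h: "n mod 6 = 4"
    have "int (card (Qm n)) = 2*(2*r+1)*(2*r+1) - r*r - (2*r+1+(2*r+1)-(3*r+2))*(2*r+1+(2*r+1)-(3*r+2))"
      unfolding Qn h using boxN_card[of r "2*r+1" "2*r+1" "3*r+2"] r1 by (simp add: Qbox_def boxI0)
    then have c: "int (card (Qm n)) = 6*r*r+8*r+2" by (simp add: algebra_simps)
    have N: "int n = 6*r - 6 + 4" using nn h by simp
    show ?thesis unfolding c N using r1 by (simp add: power2_eq_square algebra_simps)
  next
    assume h: "n mod 6 = 5"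
    have "int (card (Qm n)) = 2*(2*r+2)*(2*r+1) - r*r - (2*r+2+(2*r+1)-(3*r+2))*(2*r+2+(2*r+1)-(3*r+2))"
      unfolding Qn h using boxN_card[of r "2*r+2" "2*r+1" "3*r+2"] r1 by (simp add: Qbox_def boxI0)
    then have c: "int (card (Qm n)) = 6*r*r+10*r+3" by (simp add: algebra_simps)
    have N: "int n = 6*r - 6 + 5" using nn h by simp
    show ?thesis unfolding c N using r1 by (simp add: power2_eq_square algebra_simps)
  qed
qed

lemma lb_arith: fixes p N a A :: int
  assumes "6*A \<le> p^2" "0 \<le> p" "even (p + A)" "even (N + a)" "(N-1)^2 < 6*a" "N^2 < 6*a + 12" "a \<le> A"
  shows "N + (if A - a > 0 then 1 else 0) + (if A - a > 0 \<and> even (A - a) then 1 else 0) \<le> p"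
proof -
  have pN: "N \<le> p"
  proof (rule ccontr)
    assume "\<not> N \<le> p"
    then have "p \<le> N - 1" by simp
    then have "p^2 \<le> (N-1)^2" using assms(2) by (simp add: power_mono)
    then show False using assms(1,5,7) by linarith
  qed
  have par: "even ((p - N) - (A - a))" using assms(3,4) by presburger
  show ?thesis
  proof (cases "A - a > 0")
    case False then show ?thesis using pN by simp
  next
    case True
    show ?thesis
    proof (cases "even (A - a)")
      case False
      then have "p \<noteq> N" using par by presburger
      then show ?thesis using pN True False by simp
    next
      case ev: True
      have "A - a \<ge> 2" using True ev by presburger
      then have "p \<noteq> N" using assms(1,6) by auto
      moreover have "p \<noteq> N + 1" using par ev by presburger
      ultimately show ?thesis using pN True ev by simp
    qed
  qed
qed

lemma Qm_valid: "Qm n \<subseteq> {f. valid f}"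
  by (simp add: Qm_def Qbox_def boxI_valid)

lemma finite_Qm: "finite (Qm n)"
  by (simp add: Qm_def Qbox_def finite_boxI)

lemma sym_mk: "sym_image (\<lambda>v. case v of (x, y) \<Rightarrow> (x + a, y + b)) (mk ` M) = mk ` (mtr a b ` M)"
proof -
  have "(\<lambda>v. case v of (x, y) \<Rightarrow> (x + a, y + b)) ` mk f = mk (mtr a b f)" for f
    by (cases f) (auto simp: mk_def mtr_def up_face_def down_face_def)
  then show ?thesis unfolding sym_image_def by (simp add: image_image)
qed

lemma lsym: "lattice_sym (\<lambda>v. case v of (x, y) \<Rightarrow> (x + a, y + b))"
  unfolding lattice_sym_def by (rule exI[of _ 0], rule exI[of _ 0], rule exI[of _ a], rule exI[of _ b]) simp

context canon begin

lemma Lay_mono: "k \<le> k' \<Longrightarrow> Lay k \<subseteq> Lay k'"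
  by (auto simp: Lay_def)

lemma Pk_mono: "k \<le> k' \<Longrightarrow> Pk k \<subseteq> Pk k'"
  using Lay_mono by (auto simp: Pk_def)

lemma Pk_valid: "Pk k \<subseteq> {f. valid f}"
  using boxI_valid by (auto simp: Pk_def B'_def Lay_def)

lemma Pk_minus: "Pk k - B' = Lay k"
  by (auto simp: Pk_def Lay_def)

lemma B'_sub: "B' \<subseteq> Pk k"
  by (simp add: Pk_def)

end

theorem theorem3p16:
  fixes A n k :: nat
  assumes "A \<ge> 6"
    and "area (qh_seq n) \<le> A" and "A < area (qh_seq (Suc n))"
    and "k = A - area (qh_seq n)"
  shows "(\<forall>P. polyiamond P \<and> area P = A \<longrightarrow>
            edge_perimeter (qh_seq n) + (if k > 0 then 1 else 0)
              + (if k > 0 \<and> even k then 1 else 0) \<le> edge_perimeter P)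
       \<and> (\<exists>P g. polyiamond P \<and> area P = A \<and> lattice_sym g
            \<and> qh_seq n \<subseteq> P \<and> P \<subseteq> sym_image g (qh_seq (Suc n))
            \<and> edge_connected (P - qh_seq n)
            \<and> P - qh_seq n \<noteq> sym_image g (qh_seq (Suc n)) - qh_seq n
            \<and> edge_perimeter P = edge_perimeter (qh_seq n) + (if k > 0 then 1 else 0)
                 + (if k > 0 \<and> even k then 1 else 0))"
proof -
  let ?Q = "Qm n"
  have aQ: "area (qh_seq n) = card ?Q" unfolding qh_seq_eq using area_eq[OF Qm_valid] .
  have aQ1: "area (qh_seq (Suc n)) = card (Qm (Suc n))" unfolding qh_seq_eq using area_eq[OF Qm_valid] .
  have pQ: "edge_perimeter (qh_seq n) = perim ?Q" unfolding qh_seq_eq using ep_eq[OF Qm_valid] .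
  have pQn: "int (perim ?Q) = int n + 6" using inv by blast
  have mQ: "mconn ?Q" using inv by blast
  have parQ: "even (perim ?Q + card ?Q)" using perim_parity[OF finite_Qm Qm_valid] .
  have af: "(int n + 5)^2 < 6 * int (card ?Q)" "(int n + 6)^2 < 6 * int (card ?Q) + 12" using area_facts by auto
  have kdef: "k = A - card ?Q" using assms(4) aQ by simp
  have aA: "card ?Q \<le> A" using assms(2) aQ by simp
  have part1: "\<forall>P. polyiamond P \<and> area P = A \<longrightarrow>
            edge_perimeter (qh_seq n) + (if k > 0 then 1 else 0)
              + (if k > 0 \<and> even k then 1 else 0) \<le> edge_perimeter P"
  proof (intro allI impI)
    fix P assume H: "polyiamond P \<and> area P = A"
    have Pf: "P \<subseteq> faces" using H by (simp add: polyiamond_def)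
    define M where "M = {f. valid f \<and> mk f \<in> P}"
    have PM: "P = mk ` M" unfolding M_def using faces_preimage[OF Pf] .
    have Mv: "M \<subseteq> {f. valid f}" unfolding M_def by auto
    have pm: "finite M" "M \<noteq> {}" "mconn M" using H poly_eq[OF Mv] PM by auto
    have cM: "card M = A" using H area_eq[OF Mv] PM by simp
    have eP: "edge_perimeter P = perim M" using ep_eq[OF Mv] PM by simp
    have iso6: "6 * int A \<le> (int (perim M))^2" using iso[OF pm(1,2) Mv pm(3)] cM by simp
    have parM: "even (perim M + A)" using perim_parity[OF pm(1) Mv] cM by simp
    have L: "int n + 6 + (if int A - int (card ?Q) > 0 then 1 else 0)
        + (if int A - int (card ?Q) > 0 \<and> even (int A - int (card ?Q)) then 1 else 0) \<le> int (perim M)"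
    proof (rule lb_arith[of "int A" "int (perim M)" "int n + 6" "int (card ?Q)"])
      show "6 * int A \<le> (int (perim M))\<^sup>2" using iso6 .
      show "0 \<le> int (perim M)" by simp
      show "even (int (perim M) + int A)" using parM by (metis even_of_nat of_nat_add)
      show "even (int n + 6 + int (card ?Q))" using parQ pQn
        by (metis (no_types) even_of_nat of_nat_add)
      show "(int n + 6 - 1)\<^sup>2 < 6 * int (card ?Q)" using af(1) by (simp add: add.commute)
      show "(int n + 6)\<^sup>2 < 6 * int (card ?Q) + 12" using af(2) .
      show "int (card ?Q) \<le> int A" using aA by simp
    qed
    have k1: "int A - int (card ?Q) = int k" using kdef aA by simp
    have "int (edge_perimeter (qh_seq n) + (if k > 0 then 1 else 0) + (if k > 0 \<and> even k then 1 else 0))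
        = int n + 6 + (if int k > 0 then 1 else 0) + (if int k > 0 \<and> even (int k) then 1 else 0)"
      using pQ pQn by simp
    also have "\<dots> \<le> int (edge_perimeter P)" using L k1 eP by simp
    finally show "edge_perimeter (qh_seq n) + (if k > 0 then 1 else 0)
              + (if k > 0 \<and> even k then 1 else 0) \<le> edge_perimeter P" by linarith
  qed
  obtain \<psi> x0 x1 y0 y1 s0 s1 a b where HH: "canon x0 x1 y0 y1 s0 s1 \<and> good \<psi>
   \<and> \<psi> ` boxI (x0+1) x1 y0 y1 s0 s1 = Qm n \<and> \<psi> ` boxI x0 x1 y0 y1 s0 s1 = mtr a b ` Qm (Suc n)"
    using trans_all[of n] by (elim exE) (rule that)
  have C: "canon x0 x1 y0 y1 s0 s1" and g: "good \<psi>"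
    and e1: "\<psi> ` boxI (x0+1) x1 y0 y1 s0 s1 = Qm n"
    and e2: "\<psi> ` boxI x0 x1 y0 y1 s0 s1 = mtr a b ` Qm (Suc n)" using HH by auto
  interpret C: canon x0 x1 y0 y1 s0 s1 by (rule C)
  define K where "K = 2*C.Kh+1"
  have K0: "0 \<le> K" using C.Kh_nn K_def by simp
  have e1': "\<psi> ` C.B' = ?Q" using e1 by (simp add: C.B'_def)
  have e2': "\<psi> ` C.Pk K = mtr a b ` Qm (Suc n)" using e2 C.B_eq by (simp add: C.B_def K_def)
  have cB': "card C.B' = card ?Q" using e1' good_card[OF g] by metis
  have cBig: "card (Qm (Suc n)) = card ?Q + nat K"
  proof -
    have "card (Qm (Suc n)) = card (mtr a b ` Qm (Suc n))" using good_card[OF good_mtr] by metis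
    also have "\<dots> = card (C.Pk K)" using e2' good_card[OF g] by metis
    also have "\<dots> = card (C.Pk (int (nat K)))" using K0 by simp
    also have "\<dots> = card ?Q + nat K" by (simp only: C.card_Pk cB')
    finally show ?thesis .
  qed
  have kK: "k < nat K" using assms(3) aQ1 cBig kdef aA by linarith
  have kK': "int k \<le> K" using kK K0 by simp
  define PM where "PM = \<psi> ` C.Pk (int k)"
  define P where "P = mk ` PM"
  define gg where "gg = (\<lambda>v. case v of (x::int, y::int) \<Rightarrow> (x + a, y + b))"
  have PMv: "PM \<subseteq> {f. valid f}" unfolding PM_def using good_valid[OF g C.Pk_valid] .
  have mB': "mconn C.B'" using mQ e1' good_mconn_iff[OF g] by metis
  have mPk: "mconn (C.Pk (int k))" using C.mconn_Pk[OF mB', of k] kK K_def by simp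
  have neQ: "?Q \<noteq> {}" using af(1) by (auto simp: power2_eq_square)
  have neB': "C.B' \<noteq> {}" using e1' neQ by auto
  have polyP: "polyiamond P"
    unfolding P_def using poly_eq[OF PMv] C.finite_Pk mPk good_mconn[OF g] neB' C.B'_sub[of "int k"]
    by (auto simp: PM_def)
  have cPk: "card (C.Pk (int k)) = card ?Q + k" using C.card_Pk cB' by simp
  have areaP: "area P = A" unfolding P_def using area_eq[OF PMv] good_card[OF g] cPk kdef aA
    by (simp add: PM_def)
  have QP: "qh_seq n \<subseteq> P" unfolding qh_seq_eq P_def PM_def using C.B'_sub[of "int k"] e1' by blast
  have symQ: "sym_image gg (qh_seq (Suc n)) = mk ` (\<psi> ` C.Pk K)"
    unfolding qh_seq_eq gg_def sym_mk e2' ..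
  have PS: "P \<subseteq> sym_image gg (qh_seq (Suc n))"
  proof -
    have sub: "C.Pk (int k) \<subseteq> C.Pk K" using C.Pk_mono[of "int k" K] kK by simp
    show ?thesis unfolding symQ P_def PM_def using sub by (intro image_mono)
  qed
  have inj_mkpsi: "inj_on (mk \<circ> \<psi>) (C.Pk K)"
  proof -
    have "inj_on mk (\<psi> ` C.Pk K)" using inj_mk good_valid[OF g C.Pk_valid] by (meson inj_on_subset)
    moreover have "inj_on \<psi> (C.Pk K)" using good_inj[OF g] by (meson inj_on_subset subset_UNIV)
    ultimately show ?thesis by (simp add: comp_inj_on)
  qed
  have diff1: "P - qh_seq n = mk ` (\<psi> ` C.Lay (int k))"
  proof -
    have "P - qh_seq n = (mk \<circ> \<psi>) ` C.Pk (int k) - (mk \<circ> \<psi>) ` C.B'"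
      unfolding P_def PM_def qh_seq_eq e1'[symmetric] by (simp add: image_comp)
    also have "\<dots> = (mk \<circ> \<psi>) ` (C.Pk (int k) - C.B')"
    proof -
      have s1: "C.Pk (int k) - C.B' \<subseteq> C.Pk K" using C.Pk_mono[OF kK'] by auto
      show ?thesis using inj_on_image_set_diff[OF inj_mkpsi s1 C.B'_sub[of K]] by simp
    qed
    finally show ?thesis using C.Pk_minus by (simp add: image_comp)
  qed
  have diff2: "sym_image gg (qh_seq (Suc n)) - qh_seq n = mk ` (\<psi> ` C.Lay K)"
  proof -
    have "sym_image gg (qh_seq (Suc n)) - qh_seq n = (mk \<circ> \<psi>) ` C.Pk K - (mk \<circ> \<psi>) ` C.B'"
      unfolding symQ unfolding qh_seq_eq e1'[symmetric] by (simp add: image_comp)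
    also have "\<dots> = (mk \<circ> \<psi>) ` (C.Pk K - C.B')"
      using inj_on_image_set_diff[OF inj_mkpsi _ C.B'_sub[of K]] by simp
    finally show ?thesis using C.Pk_minus by (simp add: image_comp)
  qed
  have ecP: "edge_connected (P - qh_seq n)"
  proof -
    have v: "\<psi> ` C.Lay (int k) \<subseteq> {f. valid f}"
      using good_valid[OF g C.Pk_valid[of "int k"]] C.Pk_minus[of "int k"] by auto
    show ?thesis unfolding diff1 ec_eq[OF v] using good_mconn[OF g C.mconn_Lay] .
  qed
  have neq: "P - qh_seq n \<noteq> sym_image gg (qh_seq (Suc n)) - qh_seq n"
  proof
    assume E: "P - qh_seq n = sym_image gg (qh_seq (Suc n)) - qh_seq n"
    have i1: "inj_on (mk \<circ> \<psi>) (C.Lay (int k))"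
    proof -
      have "C.Lay (int k) \<subseteq> C.Pk K" using C.Pk_minus[of K] C.Lay_mono[OF kK'] by auto
      then show ?thesis using inj_mkpsi by (rule inj_on_subset[rotated])
    qed
    have i2: "inj_on (mk \<circ> \<psi>) (C.Lay K)"
    proof -
      have "C.Lay K \<subseteq> C.Pk K" using C.Pk_minus[of K] by auto
      then show ?thesis using inj_mkpsi by (rule inj_on_subset[rotated])
    qed
    have "card (P - qh_seq n) = k" unfolding diff1 using card_image[OF i1] C.card_Lay[of k] by (simp add: image_comp)
    moreover have "card (sym_image gg (qh_seq (Suc n)) - qh_seq n) = nat K"
      unfolding diff2 using card_image[OF i2] C.card_Lay[of "nat K"] K0 by (simp add: image_comp)
    ultimately show False using E kK by simp
  qed
  have perP: "edge_perimeter P = edge_perimeter (qh_seq n) + (if k > 0 then 1 else 0)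
                 + (if k > 0 \<and> even k then 1 else 0)"
  proof -
    have "edge_perimeter P = perim (C.Pk (int k))" unfolding P_def PM_def
      using ep_eq[OF PMv[unfolded PM_def]] good_perim[OF g] by simp
    moreover have "perim C.B' = perim ?Q" using e1' good_perim[OF g] by metis
    moreover have "int (perim (C.Pk (int k))) = int (perim C.B') + (if int k = 0 then 0 else if odd (int k) then 1 else 2)"
      using C.perim_Pk[of "int k"] kK K_def by simp
    ultimately show ?thesis using pQ by auto
  qed
  show ?thesis using part1 polyP areaP lsym QP PS ecP neq perP unfolding gg_def by blast
qed

end
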